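(* Let $\lambda,\mu,\nu\in\mathbb{R}$, not all zero, and let $G\subseteq\mathbb{R}\times\mathrm{U}(1)^2$ be the subgroup of elements $(c,e^{i\phi_1},e^{i\phi_2})$ with $\lambda c+\mu\phi_1+\nu\phi_2=0$, acting on $\mathbb{R}\oplus\mathbb{C}^3$ by $(x_1,z_1,z_2,z_3)\mapsto(x_1+c,e^{i\phi_1}z_1,e^{i\phi_2}z_2,e^{-i(\phi_1+\phi_2)}z_3)$. Let $x_1(t)$ be real and $z_1(t),z_2(t),z_3(t)$ complex smooth functions satisfying $$\dot x_1=0,\quad \dot z_1=-\nu z_1-\lambda\overline{z_2z_3},\quad \dot z_2=\mu z_2-\lambda\overline{z_3z_1},\quad \dot z_3=(\nu-\mu)z_3-\lambda\overline{z_1z_2},$$ with initial point whose $G$-orbit is $2$-dimensional. Then there exists $\epsilon>0$ such that a solution exists for $t\in(-\epsilon,\epsilon)$, and $$M=\big\{\big(x_1(t)+c,\,e^{i\phi_1}z_1(t),\,e^{i\phi_2}z_2(t),\,e^{-i(\phi_1+\phi_2)}z_3(t)\big):t\in(-\epsilon,\epsilon),\ (c,e^{i\phi_1},e^{i\phi_2})\in G\big\}$$ is an associative $3$-fold in $\mathbb{R}^7$. Moreover, if $\mu,\nu$ are not both zero, $M$ does not lie in $\{x\}\times\mathbb{C}^3$ for any $x\in\mathbb{R}$, and along solutions $\mathrm{Im}(z_1z_2z_3)=A$ is a real constant.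
   Context: $\mathbb{R}^7\cong\mathbb{R}\oplus\mathbb{C}^3$ via $z_1=x_2+ix_3$, $z_2=x_4+ix_5$, $z_3=x_6+ix_7$. Associative $3$-folds are oriented $3$-dimensional submanifolds calibrated by $\varphi_0=d\mathbf{x}_{123}+d\mathbf{x}_{145}+d\mathbf{x}_{167}+d\mathbf{x}_{246}-d\mathbf{x}_{257}-d\mathbf{x}_{347}-d\mathbf{x}_{356}$ ($d\mathbf{x}_{ijk}=dx_i\wedge dx_j\wedge dx_k$), i.e. $\varphi_0|_{T_xN}=\mathrm{vol}_{T_xN}$. *)

theory Defs
  imports "HOL-Analysis.Analysis"
begin

text \<open>R^7 = R (+) C^3 with x1, z1 = x2 + i x3, z2 = x4 + i x5, z3 = x6 + i x7.
  The product type carries the Euclidean inner product of R^7.\<close>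
type_synonym R7 = "real \<times> complex \<times> complex \<times> complex"

definition coord :: "R7 \<Rightarrow> nat \<Rightarrow> real" where
  "coord p k = (case p of (x1, z1, z2, z3) \<Rightarrow>
     (if k = 1 then x1 else if k = 2 then Re z1 else if k = 3 then Im z1
      else if k = 4 then Re z2 else if k = 5 then Im z2
      else if k = 6 then Re z3 else if k = 7 then Im z3 else 0))"

definition dx3 :: "nat \<Rightarrow> nat \<Rightarrow> nat \<Rightarrow> R7 \<Rightarrow> R7 \<Rightarrow> R7 \<Rightarrow> real" where
  "dx3 i j k u v w =
     coord u i * (coord v j * coord w k - coord v k * coord w j)
   - coord u j * (coord v i * coord w k - coord v k * coord w i)
   + coord u k * (coord v i * coord w j - coord v j * coord w i)"

definition phi0 :: "R7 \<Rightarrow> R7 \<Rightarrow> R7 \<Rightarrow> real" where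
  "phi0 u v w = dx3 1 2 3 u v w + dx3 1 4 5 u v w + dx3 1 6 7 u v w + dx3 2 4 6 u v w
              - dx3 2 5 7 u v w - dx3 3 4 7 u v w - dx3 3 5 6 u v w"

definition vol3 :: "R7 \<Rightarrow> R7 \<Rightarrow> R7 \<Rightarrow> real" where
  "vol3 u v w = sqrt (
       (u \<bullet> u) * ((v \<bullet> v) * (w \<bullet> w) - (v \<bullet> w) * (w \<bullet> v))
     - (u \<bullet> v) * ((v \<bullet> u) * (w \<bullet> w) - (v \<bullet> w) * (w \<bullet> u))
     + (u \<bullet> w) * ((v \<bullet> u) * (w \<bullet> v) - (v \<bullet> v) * (w \<bullet> u)))"

text \<open>An (immersed, connected) associative 3-fold: a set which is the image of a C^1
  immersion F of a connected open subset of R^3 into R^7, oriented (by F or by its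
  reverse) so that phi0 restricts to the volume form on every tangent space.\<close>
definition associative_3fold :: "R7 set \<Rightarrow> bool" where
  "associative_3fold M \<longleftrightarrow>
     (\<exists>(U :: (real \<times> real \<times> real) set) (F :: real \<times> real \<times> real \<Rightarrow> R7) DF s.
        open U \<and> connected U \<and> U \<noteq> {} \<and> F ` U = M \<and>
        (\<forall>u\<in>U. (F has_derivative blinfun_apply (DF u)) (at u)) \<and>
        continuous_on U DF \<and>
        (\<forall>u\<in>U. inj (blinfun_apply (DF u))) \<and>
        (s = 1 \<or> s = -1) \<and>
        (\<forall>u\<in>U. s * phi0 (DF u (1,0,0)) (DF u (0,1,0)) (DF u (0,0,1))
                 = vol3 (DF u (1,0,0)) (DF u (0,1,0)) (DF u (0,0,1))))"

definition act :: "real \<Rightarrow> real \<Rightarrow> real \<Rightarrow> R7 \<Rightarrow> R7" where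
  "act c a b p = (case p of (x1, z1, z2, z3) \<Rightarrow>
     (x1 + c, cis a * z1, cis b * z2, cis (- (a + b)) * z3))"

definition inf_act :: "real \<Rightarrow> real \<Rightarrow> real \<Rightarrow> R7 \<Rightarrow> R7" where
  "inf_act c a b p = (case p of (x1, z1, z2, z3) \<Rightarrow>
     (c, \<i> * a * z1, \<i> * b * z2, - \<i> * (a + b) * z3))"

text \<open>The G-orbit through p is 2-dimensional (G has the 2-dimensional Lie algebra
  g = {(c,a,b). lam c + mu a + nu b = 0}): the infinitesimal action restricted to g is
  injective, i.e. its rank is 2 = dim g.\<close>
definition orbit_2dim :: "real \<Rightarrow> real \<Rightarrow> real \<Rightarrow> R7 \<Rightarrow> bool" where
  "orbit_2dim lam mu nu p \<longleftrightarrow>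
     (\<forall>c a b. lam * c + mu * a + nu * b = 0 \<and> inf_act c a b p = 0 \<longrightarrow> c = 0 \<and> a = 0 \<and> b = 0)"

definition is_solution ::
  "real \<Rightarrow> real \<Rightarrow> real \<Rightarrow> R7 \<Rightarrow> real set \<Rightarrow>
   (real \<Rightarrow> real) \<Rightarrow> (real \<Rightarrow> complex) \<Rightarrow> (real \<Rightarrow> complex) \<Rightarrow> (real \<Rightarrow> complex) \<Rightarrow> bool" where
  "is_solution lam mu nu p0 I x1 z1 z2 z3 \<longleftrightarrow>
     (x1 0, z1 0, z2 0, z3 0) = p0 \<and>
     (\<forall>t\<in>I.
        (x1 has_real_derivative 0) (at t) \<and>
        (z1 has_vector_derivative (- of_real nu * z1 t - of_real lam * cnj (z2 t * z3 t))) (at t) \<and>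
        (z2 has_vector_derivative (of_real mu * z2 t - of_real lam * cnj (z3 t * z1 t))) (at t) \<and>
        (z3 has_vector_derivative (of_real (nu - mu) * z3 t - of_real lam * cnj (z1 t * z2 t))) (at t))"

definition swept :: "real \<Rightarrow> real \<Rightarrow> real \<Rightarrow> real set \<Rightarrow>
   (real \<Rightarrow> real) \<Rightarrow> (real \<Rightarrow> complex) \<Rightarrow> (real \<Rightarrow> complex) \<Rightarrow> (real \<Rightarrow> complex) \<Rightarrow> R7 set" where
  "swept lam mu nu I x1 z1 z2 z3 =
     {act c a b (x1 t, z1 t, z2 t, z3 t) | t c a b. t \<in> I \<and> lam * c + mu * a + nu * b = 0}"

end

theory Submission
  imports Defs
begin

lemma inner_R7: "((x::real),(a1::complex),(a2::complex),(a3::complex)) \<bullet> (y,b1,b2,b3) = x*y + (Re a1*Re b1 + Im a1*Im b1) + (Re a2*Re b2 + Im a2*Im b2) + (Re a3*Re b3 + Im a3*Im b3)"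
  by (simp add: inner_prod_def inner_complex_def)

lemma inf_act_simp: "inf_act c a b (x,z1,z2,z3) = (c, \<i> * a * z1, \<i> * b * z2, - \<i> * (a + b) * z3)"
  by (simp add: inf_act_def)

definition "VV l m n z1 z2 z3 = (0::real, - of_real n * z1 - of_real l * cnj (z2*z3), of_real m * z2 - of_real l * cnj (z3*z1), of_real (n - m) * z3 - of_real l * cnj (z1*z2))"

lemma core_orth:
  fixes z1 z2 z3 :: complex and x c1 a1 b1 c2 a2 b2 :: real
  shows "VV (a1*b2 - b1*a2) (b1*c2 - c1*b2) (c1*a2 - a1*c2) z1 z2 z3 \<bullet> inf_act c1 a1 b1 (x,z1,z2,z3) = 0"
  unfolding inf_act_simp VV_def inner_R7 
  by (simp add: algebra_simps)

lemma core_vv: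
  fixes z1 z2 z3 :: complex and x c1 a1 b1 c2 a2 b2 :: real
  defines "X1 \<equiv> inf_act c1 a1 b1 (x,z1,z2,z3)" and "X2 \<equiv> inf_act c2 a2 b2 (x,z1,z2,z3)"
  shows "VV (a1*b2 - b1*a2) (b1*c2 - c1*b2) (c1*a2 - a1*c2) z1 z2 z3 \<bullet> VV (a1*b2 - b1*a2) (b1*c2 - c1*b2) (c1*a2 - a1*c2) z1 z2 z3
     = (X1 \<bullet> X1) * (X2 \<bullet> X2) - (X1 \<bullet> X2) * (X1 \<bullet> X2)"
  unfolding X1_def X2_def inf_act_simp VV_def inner_R7 
  by (simp add: algebra_simps)

lemma core_phi:
  fixes z1 z2 z3 :: complex and x c1 a1 b1 c2 a2 b2 :: real
  defines "X1 \<equiv> inf_act c1 a1 b1 (x,z1,z2,z3)" and "X2 \<equiv> inf_act c2 a2 b2 (x,z1,z2,z3)"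
  shows "phi0 (VV (a1*b2 - b1*a2) (b1*c2 - c1*b2) (c1*a2 - a1*c2) z1 z2 z3) X1 X2
     = (X1 \<bullet> X1) * (X2 \<bullet> X2) - (X1 \<bullet> X2) * (X1 \<bullet> X2)"
  unfolding X1_def X2_def inf_act_simp VV_def inner_R7 phi0_def dx3_def coord_def
  by (simp add: algebra_simps)


lemma inner_R7c: "((x::real),(a1::complex),(a2::complex),(a3::complex)) \<bullet> (y,b1,b2,b3) = x*y + Re (cnj a1 * b1) + Re (cnj a2 * b2) + Re(cnj a3 * b3)"
  by (simp add: inner_prod_def inner_complex_def)

definition om :: "complex \<Rightarrow> complex \<Rightarrow> complex \<Rightarrow> complex \<Rightarrow> complex \<Rightarrow> complex \<Rightarrow> real" where
 "om a1 a2 a3 b1 b2 b3 = Im (cnj a1 * b1) + Im (cnj a2 * b2) + Im (cnj a3 * b3)"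

lemma phi0_cx: "phi0 (x,a1,a2,a3) (y,b1,b2,b3) (w,c1,c2,c3) =
   x * om b1 b2 b3 c1 c2 c3 - y * om a1 a2 a3 c1 c2 c3 + w * om a1 a2 a3 b1 b2 b3
   + Re (a1*(b2*c3 - b3*c2) - a2*(b1*c3 - b3*c1) + a3*(b1*c2 - b2*c1))"
  unfolding phi0_def dx3_def coord_def om_def by (simp add: algebra_simps)

lemma act0: "act 0 a b (x,w1,w2,w3) = (x, cis a * w1, cis b * w2, cis (-(a+b)) * w3)"
  by (simp add: act_def)

lemma cis_unit: "cnj (cis a) * cis a = 1"
  by (simp add: cis_cnj cis_mult)

lemma cis_prod3: "cis a * cis b * cis (-(a+b)) = 1"
  by (simp add: cis_mult)

lemma unit_mult: "cnj u * u = 1 \<Longrightarrow> cnj (u * p) * (u * q) = cnj p * q"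
proof -
  assume "cnj u * u = 1"
  then have "cnj (u * p) * (u * q) = (cnj u * u) * (cnj p * q)" by (simp add: algebra_simps)
  then show ?thesis using \<open>cnj u * u = 1\<close> by simp
qed

lemma phi0_act0: "phi0 (act 0 a b u) (act 0 a b v) (act 0 a b w) = phi0 u v w"
proof -
  obtain x a1 a2 a3 where u: "u = (x,a1,a2,a3)" by (cases u) auto
  obtain y b1 b2 b3 where v: "v = (y,b1,b2,b3)" by (cases v) auto
  obtain s c1 c2 c3 where w: "w = (s,c1,c2,c3)" by (cases w) auto
  define u1 where "u1 = cis a"
  define u2 where "u2 = cis b"
  define u3 where "u3 = cis (-(a+b))"
  have h1: "cnj u1 * u1 = 1" "cnj u2 * u2 = 1" "cnj u3 * u3 = 1" unfolding u1_def u2_def u3_def by (rule cis_unit)+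
  have h2: "u1*u2*u3 = 1" unfolding u1_def u2_def u3_def by (rule cis_prod3)
  have om: "om (u1*p1) (u2*p2) (u3*p3) (u1*q1) (u2*q2) (u3*q3) = om p1 p2 p3 q1 q2 q3" for p1 p2 p3 q1 q2 q3
    unfolding om_def unit_mult[OF h1(1)] unit_mult[OF h1(2)] unit_mult[OF h1(3)] by (rule refl)
  have det: "(u1*a1)*((u2*b2)*(u3*c3) - (u3*b3)*(u2*c2)) - (u2*a2)*((u1*b1)*(u3*c3) - (u3*b3)*(u1*c1)) + (u3*a3)*((u1*b1)*(u2*c2) - (u2*b2)*(u1*c1))
     = (u1*u2*u3) * (a1*(b2*c3 - b3*c2) - a2*(b1*c3 - b3*c1) + a3*(b1*c2 - b2*c1))"
    by (simp add: algebra_simps)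
  show ?thesis unfolding u v w act0 phi0_cx u1_def[symmetric] u2_def[symmetric] u3_def[symmetric] om det h2 by simp
qed

lemma inner_act0: "(act 0 a b u) \<bullet> (act 0 a b v) = u \<bullet> v"
proof -
  obtain x a1 a2 a3 where u: "u = (x,a1,a2,a3)" by (cases u) auto
  obtain y b1 b2 b3 where v: "v = (y,b1,b2,b3)" by (cases v) auto
  show ?thesis unfolding u v act0 inner_R7c unit_mult[OF cis_unit] by (rule refl)
qed



lemma int_diff_bound:
  fixes g :: "real \<Rightarrow> 'a::banach"
  assumes cg: "continuous_on {a..b} g" and B: "\<And>x. x \<in> {a..b} \<Longrightarrow> norm (g x) \<le> B"
    and u: "u \<in> {a..b}" and v: "v \<in> {a..b}"
  shows "norm (integral {a..u} g - integral {a..v} g) \<le> B * \<bar>u - v\<bar>"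
proof -
  have d: "((\<lambda>u. integral {a..u} g) has_derivative (\<lambda>h. h *\<^sub>R g x)) (at x within {a..b})"
    if "x \<in> {a..b}" for x
    using integral_has_vector_derivative[OF cg that] by (simp add: has_vector_derivative_def)
  have o: "onorm (\<lambda>h. h *\<^sub>R g x) \<le> B" if "x \<in> {a..b}" for x
  proof (rule onorm_bound)
    show "0 \<le> B" using B[OF that] norm_ge_zero[of "g x"] by linarith
    fix h :: real show "norm (h *\<^sub>R g x) \<le> B * norm h"
      using mult_left_mono[OF B[OF that] abs_ge_zero[of h]] by (simp add: mult.commute)
  qed
  from differentiable_bound[OF convex_closed_interval(1) d o u v]
  show ?thesis by simp
qed

lemma picard:
  fixes f :: "'a::banach \<Rightarrow> 'a"
  assumes contf: "continuous_on UNIV f" and r: "r > 0"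
    and lip: "\<And>x y. x \<in> cball y0 r \<Longrightarrow> y \<in> cball y0 r \<Longrightarrow> norm (f x - f y) \<le> L * norm (x - y)"
    and bnd: "\<And>x. x \<in> cball y0 r \<Longrightarrow> norm (f x) \<le> M"
  shows "\<exists>e>0. \<exists>y. y 0 = y0 \<and> (\<forall>t\<in>{-e<..<e}. (y has_vector_derivative f (y t)) (at t))"
proof -
  have M0: "0 \<le> M"
  proof -
    have "norm (f y0) \<le> M" using bnd[of y0] r by simp
    then show ?thesis using norm_ge_zero[of "f y0"] by linarith
  qed
  define e where "e = min (r / (M + 1)) (1 / (2 * (\<bar>L\<bar> + 1)))"
  have e0: "e > 0" unfolding e_def using r M0 by simp
  have eM: "e * M \<le> r"
  proof -
    have "e * M \<le> r / (M + 1) * M" unfolding e_def using M0 by (intro mult_right_mono) auto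
    also have "\<dots> \<le> r" using r M0 by (simp add: field_simps)
    finally show ?thesis .
  qed
  have eL: "e * \<bar>L\<bar> \<le> 1/2"
  proof -
    have "e * \<bar>L\<bar> \<le> 1 / (2 * (\<bar>L\<bar> + 1)) * \<bar>L\<bar>" unfolding e_def by (intro mult_right_mono) auto
    also have "\<dots> \<le> 1/2" by (simp add: field_simps)
    finally show ?thesis .
  qed
  define cl where "cl t = max (-e) (min e t)" for t
  have cl_in: "cl t \<in> {-e..e}" for t unfolding cl_def using e0 by auto
  have clid: "u \<in> {-e<..<e} \<Longrightarrow> cl u = u" for u unfolding cl_def by auto
  have cl_cont: "continuous_on UNIV cl" unfolding cl_def by (intro continuous_intros)
  define J where "J y u = integral {-e..u} (\<lambda>s. f (apply_bcontfun y s))" for y u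
  define R where "R y t = y0 + (J y (cl t) - J y 0)" for y :: "real \<Rightarrow>\<^sub>C 'a" and t
  define T where "T y = Bcontfun (R y)" for y :: "real \<Rightarrow>\<^sub>C 'a"
  define S :: "(real \<Rightarrow>\<^sub>C 'a) set" where "S = PiC UNIV (\<lambda>_. cball y0 r)"
  have inS: "apply_bcontfun y s \<in> cball y0 r" if "y \<in> S" for y :: "real \<Rightarrow>\<^sub>C 'a" and s
    using that unfolding S_def mem_PiC_iff by auto
  have cfy: "continuous_on {-e..e} (\<lambda>s. f (apply_bcontfun y s))" for y :: "real \<Rightarrow>\<^sub>C 'a"
    by (rule continuous_on_compose2[OF contf]) auto
  have Jb: "norm (J y u - J y v) \<le> M * \<bar>u - v\<bar>" if "y \<in> S" "u \<in> {-e..e}" "v \<in> {-e..e}" for y :: "real \<Rightarrow>\<^sub>C 'a" and u v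
    unfolding J_def using int_diff_bound[OF cfy _ that(2,3)] bnd[OF inS[OF that(1)]] by blast
  have Jc: "continuous_on {-e..e} (J y)" for y :: "real \<Rightarrow>\<^sub>C 'a"
    unfolding J_def by (rule indefinite_integral_continuous_1[OF integrable_continuous_interval[OF cfy]])
  have Rc: "continuous_on UNIV (R y)" for y :: "real \<Rightarrow>\<^sub>C 'a"
    unfolding R_def by (intro continuous_intros continuous_on_compose2[OF Jc cl_cont]) (use cl_in in auto)
  have Rball: "dist y0 (R y t) \<le> r" if "y \<in> S" for y :: "real \<Rightarrow>\<^sub>C 'a" and t
  proof -
    have "dist y0 (R y t) = norm (J y (cl t) - J y 0)" unfolding R_def by (simp add: dist_norm norm_minus_commute)
    also have "\<dots> \<le> M * \<bar>cl t - 0\<bar>" using Jb[OF that cl_in[of t], of 0] e0 by simp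
    also have "\<dots> \<le> M * e" using cl_in[of t] M0 by (intro mult_left_mono) auto
    finally show ?thesis using eM by (simp add: mult.commute)
  qed
  have RB: "R y \<in> bcontfun" if "y \<in> S" for y :: "real \<Rightarrow>\<^sub>C 'a"
  proof (rule bcontfun_normI[OF Rc])
    fix t
    have "norm (R y t) \<le> norm y0 + dist y0 (R y t)" by (metis dist_norm norm_triangle_sub norm_minus_commute)
    then show "norm (R y t) \<le> norm y0 + r" using Rball[OF that, of t] by simp
  qed
  have TR: "apply_bcontfun (T y) = R y" if "y \<in> S" for y :: "real \<Rightarrow>\<^sub>C 'a"
    unfolding T_def using RB[OF that] by (simp add: Bcontfun_inverse)
  have TS: "T ` S \<subseteq> S"
    using TR Rball unfolding S_def by (auto simp: mem_PiC_iff)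
  have Sc: "complete S" unfolding S_def
    by (simp add: complete_eq_closed closed_PiC)
  have Sne: "S \<noteq> {}"
  proof -
    have "const_bcontfun y0 \<in> S" unfolding S_def mem_PiC_iff using r by (simp add: const_bcontfun.rep_eq)
    then show ?thesis by blast
  qed
  have contr: "dist (T y) (T w) \<le> 1/2 * dist y w" if "y \<in> S" "w \<in> S" for y w :: "real \<Rightarrow>\<^sub>C 'a"
  proof (rule dist_bound)
    fix t
    define g where "g s = f (apply_bcontfun y s) - f (apply_bcontfun w s)" for s
    have cg: "continuous_on {-e..e} g" unfolding g_def by (intro continuous_intros cfy)
    have gb: "norm (g s) \<le> \<bar>L\<bar> * dist y w" for s
    proof -
      have "norm (g s) \<le> L * norm (apply_bcontfun y s - apply_bcontfun w s)"
        unfolding g_def by (rule lip[OF inS[OF that(1)] inS[OF that(2)]])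
      also have "\<dots> \<le> \<bar>L\<bar> * dist (apply_bcontfun y s) (apply_bcontfun w s)"
        by (simp add: dist_norm mult_right_mono)
      also have "\<dots> \<le> \<bar>L\<bar> * dist y w" by (intro mult_left_mono dist_bounded) auto
      finally show ?thesis .
    qed
    have Jd: "J y u - J w u = integral {-e..u} g" if "u \<in> {-e..e}" for u
      unfolding J_def g_def
      by (rule Henstock_Kurzweil_Integration.integral_diff[symmetric];
          rule integrable_continuous_interval; rule continuous_on_subset[OF cfy]) (use that in auto)
    have "dist (apply_bcontfun (T y) t) (apply_bcontfun (T w) t) = norm ((J y (cl t) - J w (cl t)) - (J y 0 - J w 0))"
      unfolding TR[OF that(1)] TR[OF that(2)] R_def dist_norm by (simp add: algebra_simps)
    also have "\<dots> = norm (integral {-e..cl t} g - integral {-e..0} g)"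
      using Jd[OF cl_in] Jd[of 0] e0 by simp
    also have "\<dots> \<le> (\<bar>L\<bar> * dist y w) * \<bar>cl t - 0\<bar>"
      by (rule int_diff_bound[OF cg gb cl_in]) (use e0 in auto)
    also have "\<dots> \<le> (\<bar>L\<bar> * dist y w) * e" using cl_in[of t] by (intro mult_left_mono) auto
    also have "\<dots> = (e * \<bar>L\<bar>) * dist y w" by simp
    also have "\<dots> \<le> 1/2 * dist y w" by (intro mult_right_mono eL) auto
    finally show "dist (apply_bcontfun (T y) t) (apply_bcontfun (T w) t) \<le> 1/2 * dist y w" .
  qed
  obtain y where yS: "y \<in> S" and yfix: "T y = y"
    using Banach_fix[OF Sc Sne _ _ TS contr] by auto
  have yR: "apply_bcontfun y t = R y t" for t using TR[OF yS] yfix by simp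
  show ?thesis
  proof (intro exI[of _ e] conjI e0 exI[of _ "apply_bcontfun y"] ballI)
    show "apply_bcontfun y 0 = y0" unfolding yR R_def cl_def using e0 by simp
    fix t assume t: "t \<in> {-e<..<e}"
    have "((\<lambda>u. y0 + (J y u - J y 0)) has_vector_derivative f (apply_bcontfun y t)) (at t within {-e..e})"
    proof -
      have "((\<lambda>u. J y u) has_vector_derivative f (apply_bcontfun y t)) (at t within {-e..e})"
        unfolding J_def by (rule integral_has_vector_derivative[OF cfy]) (use t in auto)
      then have "((\<lambda>u. y0 + (J y u - J y 0)) has_vector_derivative 0 + (f (apply_bcontfun y t) - 0)) (at t within {-e..e})"
        by (intro has_vector_derivative_add has_vector_derivative_diff has_vector_derivative_const)
      then show ?thesis by simp
    qed
    then have "((\<lambda>u. y0 + (J y u - J y 0)) has_vector_derivative f (apply_bcontfun y t)) (at t)"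
      using t at_within_interior[of t "{-e..e}"] by simp
    then show "(apply_bcontfun y has_vector_derivative f (apply_bcontfun y t)) (at t)"
      by (rule has_vector_derivative_transform_within_open[of _ _ _ "{-e<..<e}"])
         (use t in \<open>simp_all add: yR R_def clid\<close>)
  qed
qed



definition fODE :: "real \<Rightarrow> real \<Rightarrow> real \<Rightarrow> complex \<times> complex \<times> complex \<Rightarrow> complex \<times> complex \<times> complex" where
 "fODE l m n w = (of_real (- n) * fst w - of_real l * cnj (fst (snd w) * snd (snd w)),
                  of_real m * fst (snd w) - of_real l * cnj (snd (snd w) * fst w),
                  of_real (n - m) * snd (snd w) - of_real l * cnj (fst w * fst (snd w)))"

lemma norm3_le: "norm ((a,b,c)::complex\<times>complex\<times>complex) \<le> norm a + norm b + norm c"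
  using norm_Pair_le[of a "(b,c)"] norm_Pair_le[of b c] by simp

lemma norm3_comp:
  fixes w :: "complex\<times>complex\<times>complex"
  shows "norm (fst w) \<le> norm w" "norm (fst (snd w)) \<le> norm w" "norm (snd (snd w)) \<le> norm w"
proof -
  obtain a b c where w: "w = (a,b,c)" by (cases w) auto
  show "norm (fst w) \<le> norm w" unfolding w using norm_fst_le[of a "(b,c)"] by simp
  show "norm (fst (snd w)) \<le> norm w" unfolding w using norm_snd_le[of "(b,c)" a] norm_fst_le[of b c] by simp
  show "norm (snd (snd w)) \<le> norm w" unfolding w using norm_snd_le[of "(b,c)" a] norm_snd_le[of c b] by simp
qed

lemma prod_lip:
  fixes a b c d :: complex
  assumes "norm a \<le> B" "norm d \<le> B" "norm (a - c) \<le> D" "norm (b - d) \<le> D"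
  shows "norm (a*b - c*d) \<le> 2*B*D"
proof -
  have "a*b - c*d = a*(b - d) + (a - c)*d" by (simp add: algebra_simps)
  then have "norm (a*b - c*d) \<le> norm a * norm (b-d) + norm (a-c) * norm d"
    by (metis norm_mult norm_triangle_ineq)
  also have "\<dots> \<le> B * D + D * B"
    using assms norm_ge_zero[of a] norm_ge_zero[of "a-c"] norm_ge_zero[of "b-d"] norm_ge_zero[of d]
    by (intro add_mono mult_mono) linarith+
  finally show ?thesis by simp
qed

lemma lin_lip:
  fixes a c :: complex and k :: real
  assumes "norm (a - c) \<le> D"
  shows "norm (of_real k * a - of_real k * c) \<le> \<bar>k\<bar> * D"
proof -
  have "norm (of_real k * a - of_real k * c) = \<bar>k\<bar> * norm (a - c)"
    by (metis norm_mult norm_of_real right_diff_distrib)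
  then show ?thesis using mult_left_mono[OF assms abs_ge_zero[of k]] by simp
qed

lemma fODE_lip:
  fixes x y :: "complex\<times>complex\<times>complex"
  assumes "norm x \<le> B" "norm y \<le> B"
  shows "norm (fODE l m n x - fODE l m n y) \<le> 3 * ((\<bar>l\<bar> + \<bar>m\<bar> + \<bar>n\<bar>) * (1 + 2*B)) * norm (x - y)"
proof -
  define D where "D = norm (x - y)"
  define K where "K = (\<bar>l\<bar> + \<bar>m\<bar> + \<bar>n\<bar>) * (1 + 2*B)"
  have B0: "0 \<le> B" using assms(1) norm_ge_zero[of x] by linarith
  have cx: "norm (fst x) \<le> B" "norm (fst (snd x)) \<le> B" "norm (snd (snd x)) \<le> B"
    using norm3_comp[of x] assms by linarith+
  have cy: "norm (fst y) \<le> B" "norm (fst (snd y)) \<le> B" "norm (snd (snd y)) \<le> B"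
    using norm3_comp[of y] assms by linarith+
  have cd: "norm (fst x - fst y) \<le> D" "norm (fst (snd x) - fst (snd y)) \<le> D" "norm (snd (snd x) - snd (snd y)) \<le> D"
    using norm3_comp[of "x - y"] unfolding D_def by auto
  have D0: "0 \<le> D" unfolding D_def by simp
  have gen: "norm ((of_real k * a - of_real l * cnj (b * c)) - (of_real k * a' - of_real l * cnj (b' * c'))) \<le> K * D"
    if "\<bar>k\<bar> \<le> \<bar>l\<bar> + \<bar>m\<bar> + \<bar>n\<bar>" "norm (a - a') \<le> D" "norm b \<le> B" "norm c' \<le> B" "norm (b - b') \<le> D" "norm (c - c') \<le> D"
    for k a b c a' b' c'
  proof -
    have e: "(of_real k * a - of_real l * cnj (b * c)) - (of_real k * a' - of_real l * cnj (b' * c'))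
        = (of_real k * a - of_real k * a') - of_real l * cnj (b * c - b' * c')" by (simp add: algebra_simps)
    have n1: "norm (of_real k * a - of_real k * a') \<le> \<bar>k\<bar> * D" by (rule lin_lip[OF that(2)])
    have n2: "norm (of_real l * cnj (b * c - b' * c')) \<le> \<bar>l\<bar> * (2*B*D)"
    proof -
      have "norm (of_real l * cnj (b * c - b' * c')) = \<bar>l\<bar> * norm (b * c - b' * c')"
        by (simp only: norm_mult norm_of_real complex_mod_cnj)
      then show ?thesis using mult_left_mono[OF prod_lip[OF that(3,4,5,6)] abs_ge_zero[of l]] by simp
    qed
    have "norm ((of_real k * a - of_real l * cnj (b * c)) - (of_real k * a' - of_real l * cnj (b' * c'))) \<le> \<bar>k\<bar> * D + \<bar>l\<bar> * (2*B*D)"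
      unfolding e using n1 n2 norm_triangle_ineq4[of "of_real k * a - of_real k * a'" "of_real l * cnj (b * c - b' * c')"] by linarith
    also have "\<dots> \<le> (\<bar>l\<bar> + \<bar>m\<bar> + \<bar>n\<bar>) * D + (\<bar>l\<bar> + \<bar>m\<bar> + \<bar>n\<bar>) * (2*B*D)"
      using that(1) D0 B0 by (intro add_mono mult_right_mono) auto
    also have "\<dots> = K * D" unfolding K_def by (simp add: algebra_simps)
    finally show ?thesis .
  qed
  have c1: "norm (fst (fODE l m n x) - fst (fODE l m n y)) \<le> K * D"
    unfolding fODE_def fst_conv by (rule gen) (use cd cx cy in auto)
  have c2: "norm (fst (snd (fODE l m n x)) - fst (snd (fODE l m n y))) \<le> K * D"
    unfolding fODE_def fst_conv snd_conv by (rule gen) (use cd cx cy in auto)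
  have c3: "norm (snd (snd (fODE l m n x)) - snd (snd (fODE l m n y))) \<le> K * D"
    unfolding fODE_def fst_conv snd_conv by (rule gen) (use cd cx cy in auto)
  have "norm (fODE l m n x - fODE l m n y) \<le> K * D + K * D + K * D"
  proof -
    have "fODE l m n x - fODE l m n y = (fst (fODE l m n x) - fst (fODE l m n y), fst (snd (fODE l m n x)) - fst (snd (fODE l m n y)), snd (snd (fODE l m n x)) - snd (snd (fODE l m n y)))"
      by (simp add: prod_eq_iff)
    then show ?thesis unfolding \<open>fODE l m n x - fODE l m n y = _\<close> using norm3_le[of "fst (fODE l m n x) - fst (fODE l m n y)" "fst (snd (fODE l m n x)) - fst (snd (fODE l m n y))" "snd (snd (fODE l m n x)) - snd (snd (fODE l m n y))"] c1 c2 c3 by linarith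
  qed
  then show ?thesis unfolding K_def D_def by (simp add: algebra_simps)
qed

lemma fODE_bound:
  fixes x :: "complex\<times>complex\<times>complex"
  assumes "norm x \<le> B"
  shows "norm (fODE l m n x) \<le> 3 * ((\<bar>l\<bar> + \<bar>m\<bar> + \<bar>n\<bar>) * (1 + 2*B)) * B"
proof -
  have B0: "0 \<le> B" using assms norm_ge_zero[of x] by linarith
  have z: "fODE l m n 0 = 0" by (simp add: fODE_def zero_prod_def)
  have "norm (fODE l m n x - fODE l m n 0) \<le> 3 * ((\<bar>l\<bar> + \<bar>m\<bar> + \<bar>n\<bar>) * (1 + 2*B)) * norm (x - 0)"
    by (rule fODE_lip) (use assms B0 in auto)
  also have "\<dots> \<le> 3 * ((\<bar>l\<bar> + \<bar>m\<bar> + \<bar>n\<bar>) * (1 + 2*B)) * B"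
    using assms B0 by (intro mult_left_mono) auto
  finally show ?thesis by (simp add: z)
qed

lemma fODE_cont: "continuous_on UNIV (fODE l m n)"
  unfolding fODE_def by (intro continuous_intros)

lemma exists_sol:
  "\<exists>e>0. \<exists>x1 z1 z2 z3. is_solution lam mu nu p0 {-e<..<e} x1 z1 z2 z3"
proof -
  define B where "B = norm (snd p0) + 1"
  define L where "L = 3 * ((\<bar>lam\<bar> + \<bar>mu\<bar> + \<bar>nu\<bar>) * (1 + 2*B))"
  have nb: "norm x \<le> B" if "x \<in> cball (snd p0) 1" for x
  proof -
    have "norm x \<le> norm (snd p0) + norm (x - snd p0)" by (metis add.commute diff_add_cancel norm_triangle_ineq)
    then show ?thesis using that unfolding B_def by (simp add: dist_norm norm_minus_commute)
  qed
  have P: "\<exists>e>0. \<exists>y. y 0 = snd p0 \<and> (\<forall>t\<in>{-e<..<e}. (y has_vector_derivative fODE lam mu nu (y t)) (at t))"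
  proof (rule picard[OF fODE_cont[of lam mu nu], where r=1 and ?y0.0="snd p0" and L=L and M="L*B"])
    show "(0::real) < 1" by simp
  next
    fix x y assume x: "x \<in> cball (snd p0) 1" and y: "y \<in> cball (snd p0) 1"
    show "norm (fODE lam mu nu x - fODE lam mu nu y) \<le> L * norm (x - y)"
      unfolding L_def by (rule fODE_lip[OF nb[OF x] nb[OF y]])
  next
    fix x assume x: "x \<in> cball (snd p0) 1"
    show "norm (fODE lam mu nu x) \<le> L * B"
      unfolding L_def by (rule fODE_bound[OF nb[OF x]])
  qed
  then obtain e Y where e: "e > 0" and Y0: "Y 0 = snd p0"
    and Yd: "\<And>t. t \<in> {-e<..<e} \<Longrightarrow> (Y has_vector_derivative fODE lam mu nu (Y t)) (at t)"
    by blast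
  define z1 where "z1 t = fst (Y t)" for t
  define z2 where "z2 t = fst (snd (Y t))" for t
  define z3 where "z3 t = snd (snd (Y t))" for t
  have "is_solution lam mu nu p0 {-e<..<e} (\<lambda>_. fst p0) z1 z2 z3"
    unfolding is_solution_def
  proof (intro conjI ballI)
    show "(fst p0, z1 0, z2 0, z3 0) = p0" unfolding z1_def z2_def z3_def Y0 by simp
    fix t assume t: "t \<in> {-e<..<e}"
    show "((\<lambda>_. fst p0) has_real_derivative 0) (at t)" by simp
    have d1: "(z1 has_vector_derivative fst (fODE lam mu nu (Y t))) (at t)"
      unfolding z1_def by (rule bounded_linear.has_vector_derivative[OF bounded_linear_fst Yd[OF t]])
    have d2: "(z2 has_vector_derivative fst (snd (fODE lam mu nu (Y t)))) (at t)"
      unfolding z2_def by (rule bounded_linear.has_vector_derivative[OF bounded_linear_fst bounded_linear.has_vector_derivative[OF bounded_linear_snd Yd[OF t]]])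
    have d3: "(z3 has_vector_derivative snd (snd (fODE lam mu nu (Y t)))) (at t)"
      unfolding z3_def by (rule bounded_linear.has_vector_derivative[OF bounded_linear_snd bounded_linear.has_vector_derivative[OF bounded_linear_snd Yd[OF t]]])
    show "(z1 has_vector_derivative (- of_real nu * z1 t - of_real lam * cnj (z2 t * z3 t))) (at t)"
      using d1 unfolding fODE_def z1_def z2_def z3_def by simp
    show "(z2 has_vector_derivative (of_real mu * z2 t - of_real lam * cnj (z3 t * z1 t))) (at t)"
      using d2 unfolding fODE_def z1_def z2_def z3_def by simp
    show "(z3 has_vector_derivative (of_real (nu - mu) * z3 t - of_real lam * cnj (z1 t * z2 t))) (at t)"
      using d3 unfolding fODE_def z1_def z2_def z3_def by simp
  qed
  then show ?thesis using e by blast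
qed



lemma gron:
  fixes Q Q' :: "real \<Rightarrow> real"
  assumes d: "\<And>t. t \<in> {lo..hi} \<Longrightarrow> (Q has_real_derivative Q' t) (at t)"
    and b: "\<And>t. t \<in> {lo..hi} \<Longrightarrow> \<bar>Q' t\<bar> \<le> K * Q t"
    and t0: "t0 \<in> {lo..hi}" and t1: "t1 \<in> {lo..hi}" and pos: "Q t0 > 0"
  shows "Q t1 > 0"
proof (cases "t0 \<le> t1")
  case True
  define h where "h t = Q t * exp (K * t)" for t
  have "h t0 \<le> h t1"
  proof (rule deriv_nonneg_imp_mono[of t0 t1 h "\<lambda>t. (Q' t + K * Q t) * exp (K * t)"])
    fix x assume x: "x \<in> {t0..t1}"
    then have xi: "x \<in> {lo..hi}" using t0 t1 by auto
    show "(h has_real_derivative (Q' x + K * Q x) * exp (K * x)) (at x)"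
      unfolding h_def using d[OF xi]
      by (auto intro!: derivative_eq_intros simp: algebra_simps)
    show "(Q' x + K * Q x) * exp (K * x) \<ge> 0"
      using b[OF xi] by (intro mult_nonneg_nonneg) auto
  qed (use True in auto)
  then have "Q t0 * exp (K * t0) \<le> Q t1 * exp (K * t1)" unfolding h_def .
  moreover have "Q t0 * exp (K * t0) > 0" using pos by simp
  ultimately have "Q t1 * exp (K * t1) > 0" by linarith
  then show ?thesis by (simp add: zero_less_mult_iff)
next
  case False
  define h where "h t = Q t * exp (- K * t)" for t
  have "h t0 \<le> h t1"
  proof (rule deriv_nonpos_imp_antimono[of t1 t0 h "\<lambda>t. (Q' t - K * Q t) * exp (- K * t)"])
    fix x assume x: "x \<in> {t1..t0}"
    then have xi: "x \<in> {lo..hi}" using t0 t1 by auto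
    show "(h has_real_derivative (Q' x - K * Q x) * exp (- K * x)) (at x)"
      unfolding h_def using d[OF xi]
      by (auto intro!: derivative_eq_intros simp: algebra_simps)
    show "(Q' x - K * Q x) * exp (- K * x) \<le> 0"
      using b[OF xi] by (intro mult_nonpos_nonneg) auto
  qed (use False in auto)
  then have "Q t0 * exp (- K * t0) \<le> Q t1 * exp (- K * t1)" unfolding h_def .
  moreover have "Q t0 * exp (- K * t0) > 0" using pos by simp
  ultimately have "Q t1 * exp (- K * t1) > 0" by linarith
  then show ?thesis by (simp add: zero_less_mult_iff)
qed

lemma nq_deriv:
  assumes "(z has_vector_derivative d) (at t)"
  shows "((\<lambda>t. (cmod (z t))\<^sup>2) has_real_derivative 2 * Re (cnj (z t) * d)) (at t)"
proof -
  have r: "((\<lambda>t. Re (z t)) has_real_derivative Re d) (at t)"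
    unfolding has_real_derivative_iff_has_vector_derivative
    by (rule bounded_linear.has_vector_derivative[OF bounded_linear_Re assms])
  have i: "((\<lambda>t. Im (z t)) has_real_derivative Im d) (at t)"
    unfolding has_real_derivative_iff_has_vector_derivative
    by (rule bounded_linear.has_vector_derivative[OF bounded_linear_Im assms])
  have "((\<lambda>t. (Re (z t))\<^sup>2 + (Im (z t))\<^sup>2) has_real_derivative 2 * Re (cnj (z t) * d)) (at t)"
  proof -
    show ?thesis
      by (rule DERIV_cong[OF DERIV_add[OF DERIV_power[OF r, of 2] DERIV_power[OF i, of 2]]]) (simp add: algebra_simps)
  qed
  then show ?thesis by (simp add: cmod_power2)
qed

lemma re_eq1: "Re (cnj z1 * (- of_real nu * z1 - of_real lam * cnj (z2 * z3))) = - nu * (cmod z1)\<^sup>2 - lam * Re (z1*z2*z3)"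
  unfolding cmod_power2 by (simp add: algebra_simps power2_eq_square)
lemma re_eq2: "Re (cnj z2 * (of_real mu * z2 - of_real lam * cnj (z3 * z1))) = mu * (cmod z2)\<^sup>2 - lam * Re (z1*z2*z3)"
  unfolding cmod_power2 by (simp add: algebra_simps power2_eq_square)
lemma re_eq3: "Re (cnj z3 * (of_real (nu - mu) * z3 - of_real lam * cnj (z1 * z2))) = (nu - mu) * (cmod z3)\<^sup>2 - lam * Re (z1*z2*z3)"
  unfolding cmod_power2 by (simp add: algebra_simps power2_eq_square)

lemma amgm2: "2 * (x * y) \<le> x\<^sup>2 + y\<^sup>2" for x y :: real
  using power2_diff[of x y] zero_le_power2[of "x-y"] by linarith

lemma prod_bound:
  fixes z1 z2 z3 :: complex and a b :: real
  defines "Q \<equiv> a\<^sup>2 * (cmod z1)\<^sup>2 + b\<^sup>2 * (cmod z2)\<^sup>2 + (a+b)\<^sup>2 * (cmod z3)\<^sup>2"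
  defines "S \<equiv> cmod z1 + cmod z2 + cmod z3"
  shows "(\<bar>a*b\<bar> + \<bar>b*(a+b)\<bar> + \<bar>a*(a+b)\<bar>) * cmod (z1*z2*z3) \<le> 3/2 * Q * S"
proof -
  have Q0: "0 \<le> Q" unfolding Q_def by simp
  have p1: "\<bar>a*b\<bar> * (cmod z1 * cmod z2) \<le> Q/2"
  proof -
    have h: "2 * ((\<bar>a\<bar> * cmod z1) * (\<bar>b\<bar> * cmod z2)) \<le> (\<bar>a\<bar> * cmod z1)\<^sup>2 + (\<bar>b\<bar> * cmod z2)\<^sup>2" by (rule amgm2)
    have q: "(\<bar>a\<bar> * cmod z1)\<^sup>2 + (\<bar>b\<bar> * cmod z2)\<^sup>2 \<le> Q" unfolding Q_def by (simp add: power_mult_distrib)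
    show ?thesis using h q by (simp only: abs_mult mult_ac; linarith)
  qed
  have p2: "\<bar>b*(a+b)\<bar> * (cmod z2 * cmod z3) \<le> Q/2"
  proof -
    have h: "2 * ((\<bar>b\<bar> * cmod z2) * (\<bar>a+b\<bar> * cmod z3)) \<le> (\<bar>b\<bar> * cmod z2)\<^sup>2 + (\<bar>a+b\<bar> * cmod z3)\<^sup>2" by (rule amgm2)
    have q: "(\<bar>b\<bar> * cmod z2)\<^sup>2 + (\<bar>a+b\<bar> * cmod z3)\<^sup>2 \<le> Q" unfolding Q_def by (simp add: power_mult_distrib)
    show ?thesis using h q by (simp only: abs_mult mult_ac; linarith)
  qed
  have p3: "\<bar>a*(a+b)\<bar> * (cmod z1 * cmod z3) \<le> Q/2"
  proof -
    have h: "2 * ((\<bar>a\<bar> * cmod z1) * (\<bar>a+b\<bar> * cmod z3)) \<le> (\<bar>a\<bar> * cmod z1)\<^sup>2 + (\<bar>a+b\<bar> * cmod z3)\<^sup>2" by (rule amgm2)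
    have q: "(\<bar>a\<bar> * cmod z1)\<^sup>2 + (\<bar>a+b\<bar> * cmod z3)\<^sup>2 \<le> Q" unfolding Q_def by (simp add: power_mult_distrib)
    show ?thesis using h q by (simp only: abs_mult mult_ac; linarith)
  qed
  have "\<bar>a*b\<bar> * cmod (z1*z2*z3) \<le> Q/2 * S"
  proof -
    have "\<bar>a*b\<bar> * cmod (z1*z2*z3) = (\<bar>a*b\<bar> * (cmod z1 * cmod z2)) * cmod z3" by (simp add: norm_mult)
    also have "\<dots> \<le> Q/2 * cmod z3" using p1 by (intro mult_right_mono) auto
    also have "\<dots> \<le> Q/2 * S" using Q0 unfolding S_def by (intro mult_left_mono) auto
    finally show ?thesis .
  qed
  moreover have "\<bar>b*(a+b)\<bar> * cmod (z1*z2*z3) \<le> Q/2 * S"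
  proof -
    have "\<bar>b*(a+b)\<bar> * cmod (z1*z2*z3) = (\<bar>b*(a+b)\<bar> * (cmod z2 * cmod z3)) * cmod z1" by (simp add: norm_mult)
    also have "\<dots> \<le> Q/2 * cmod z1" using p2 by (intro mult_right_mono) auto
    also have "\<dots> \<le> Q/2 * S" using Q0 unfolding S_def by (intro mult_left_mono) auto
    finally show ?thesis .
  qed
  moreover have "\<bar>a*(a+b)\<bar> * cmod (z1*z2*z3) \<le> Q/2 * S"
  proof -
    have "\<bar>a*(a+b)\<bar> * cmod (z1*z2*z3) = (\<bar>a*(a+b)\<bar> * (cmod z1 * cmod z3)) * cmod z2" by (simp add: norm_mult)
    also have "\<dots> \<le> Q/2 * cmod z2" using p3 by (intro mult_right_mono) auto
    also have "\<dots> \<le> Q/2 * S" using Q0 unfolding S_def by (intro mult_left_mono) auto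
    finally show ?thesis .
  qed
  ultimately show ?thesis by (simp add: algebra_simps)
qed



lemma Qbound:
  fixes a b lam mu nu Sb :: real and z1 z2 z3 :: complex
  defines "Q \<equiv> a\<^sup>2 * (cmod z1)\<^sup>2 + b\<^sup>2 * (cmod z2)\<^sup>2 + (a+b)\<^sup>2 * (cmod z3)\<^sup>2"
  defines "m \<equiv> \<bar>a*b\<bar> + \<bar>b*(a+b)\<bar> + \<bar>a*(a+b)\<bar>"
  defines "W \<equiv> a\<^sup>2 + b\<^sup>2 + (a+b)\<^sup>2"
  assumes m: "m > 0" and Sb: "cmod z1 + cmod z2 + cmod z3 \<le> Sb"
  shows "\<bar>2*(- nu * a\<^sup>2 * (cmod z1)\<^sup>2 + mu * b\<^sup>2 * (cmod z2)\<^sup>2 + (nu - mu) * (a+b)\<^sup>2 * (cmod z3)\<^sup>2)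
           - 2 * lam * W * Re (z1*z2*z3)\<bar> \<le> (2*(\<bar>mu\<bar>+\<bar>nu\<bar>) + 3*\<bar>lam\<bar>*W*Sb/m) * Q"
proof -
  define n1 where "n1 = a\<^sup>2 * (cmod z1)\<^sup>2"
  define n2 where "n2 = b\<^sup>2 * (cmod z2)\<^sup>2"
  define n3 where "n3 = (a+b)\<^sup>2 * (cmod z3)\<^sup>2"
  have n0: "0 \<le> n1" "0 \<le> n2" "0 \<le> n3" unfolding n1_def n2_def n3_def by auto
  have Qn: "Q = n1 + n2 + n3" unfolding Q_def n1_def n2_def n3_def ..
  have e: "- nu * a\<^sup>2 * (cmod z1)\<^sup>2 + mu * b\<^sup>2 * (cmod z2)\<^sup>2 + (nu - mu) * (a+b)\<^sup>2 * (cmod z3)\<^sup>2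
     = - nu * n1 + mu * n2 + (nu - mu) * n3" unfolding n1_def n2_def n3_def by (simp add: algebra_simps)
  have t1: "\<bar>nu * n1\<bar> \<le> (\<bar>mu\<bar>+\<bar>nu\<bar>) * n1" using n0 by (simp add: abs_mult mult_right_mono)
  have t2: "\<bar>mu * n2\<bar> \<le> (\<bar>mu\<bar>+\<bar>nu\<bar>) * n2" using n0 by (simp add: abs_mult mult_right_mono)
  have t3: "\<bar>(nu - mu) * n3\<bar> \<le> (\<bar>mu\<bar>+\<bar>nu\<bar>) * n3" using n0 by (simp add: abs_mult mult_right_mono)
  have h1: "\<bar>- nu * n1 + mu * n2 + (nu - mu) * n3\<bar> \<le> (\<bar>mu\<bar>+\<bar>nu\<bar>) * Q"
    using t1 t2 t3 unfolding Qn by (simp add: algebra_simps abs_le_iff) linarith?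
  have Q0: "0 \<le> Q" using n0 Qn by simp
  have W0: "0 \<le> W" unfolding W_def by simp
  have S0: "0 \<le> Sb" using Sb by (metis add_nonneg_nonneg norm_ge_zero order_trans)
  have pb: "m * cmod (z1*z2*z3) \<le> 3/2 * Q * Sb"
  proof -
    have "m * cmod (z1*z2*z3) \<le> 3/2 * Q * (cmod z1 + cmod z2 + cmod z3)"
      using prod_bound[of a b z1 z2 z3] unfolding m_def Q_def by simp
    also have "\<dots> \<le> 3/2 * Q * Sb" using Q0 Sb by (intro mult_left_mono) auto
    finally show ?thesis .
  qed
  have pb2: "cmod (z1*z2*z3) \<le> 3/2 * Q * Sb / m"
    using pb m by (simp add: field_simps mult.commute)
  have h2: "\<bar>2 * lam * W * Re (z1*z2*z3)\<bar> \<le> 3*\<bar>lam\<bar>*W*Sb/m * Q"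
  proof -
    have "\<bar>2 * lam * W * Re (z1*z2*z3)\<bar> = 2 * \<bar>lam\<bar> * W * \<bar>Re (z1*z2*z3)\<bar>"
      using W0 by (simp add: abs_mult)
    also have "\<dots> \<le> 2 * \<bar>lam\<bar> * W * (3/2 * Q * Sb / m)"
      using abs_Re_le_cmod[of "z1*z2*z3"] pb2 W0 by (intro mult_left_mono) auto
    also have "\<dots> = 3*\<bar>lam\<bar>*W*Sb/m * Q" by (simp add: field_simps)
    finally show ?thesis .
  qed
  show ?thesis unfolding e using h1 h2 by (simp add: algebra_simps abs_le_iff) linarith?
qed

lemma cont_of_deriv:
  assumes "\<And>s. s \<in> A \<Longrightarrow> (z has_vector_derivative d s) (at s)"
  shows "continuous_on A z"
  by (rule continuous_at_imp_continuous_on) (use assms has_vector_derivative_continuous in blast)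

lemma orbit_pres:
  assumes sol: "is_solution lam mu nu p0 {-e<..<e} x1 z1 z2 z3"
    and orb: "orbit_2dim lam mu nu p0" and t: "t \<in> {-e<..<e}"
  shows "orbit_2dim lam mu nu (x1 t, z1 t, z2 t, z3 t)"
  unfolding orbit_2dim_def
proof (intro allI impI)
  fix c a b assume h: "lam * c + mu * a + nu * b = 0 \<and> inf_act c a b (x1 t, z1 t, z2 t, z3 t) = 0"
  have c0: "c = 0" and w1: "a * z1 t = 0" and w2: "b * z2 t = 0" and w3: "(a + b) * z3 t = 0"
    using h by (auto simp: inf_act_def zero_prod_def)
  show "c = 0 \<and> a = 0 \<and> b = 0"
  proof (rule ccontr)
    assume nab: "\<not> (c = 0 \<and> a = 0 \<and> b = 0)"
    then have ab: "a \<noteq> 0 \<or> b \<noteq> 0" using c0 by auto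
    define Q where "Q s = a\<^sup>2 * (cmod (z1 s))\<^sup>2 + b\<^sup>2 * (cmod (z2 s))\<^sup>2 + (a+b)\<^sup>2 * (cmod (z3 s))\<^sup>2" for s
    have q1: "a = 0 \<or> z1 t = 0" using w1 by simp
    have q2: "b = 0 \<or> z2 t = 0" using w2 by simp
    have q3: "a + b = 0 \<or> z3 t = 0" using w3 by (metis mult_eq_0_iff of_real_add of_real_eq_0_iff)
    have Qt: "Q t = 0" unfolding Q_def using q1 q2 q3 by auto
    have p0: "p0 = (x1 0, z1 0, z2 0, z3 0)" using sol unfolding is_solution_def by simp
    have Q0: "Q 0 > 0"
    proof (rule ccontr)
      assume "\<not> Q 0 > 0"
      then have "Q 0 = 0" unfolding Q_def by (smt (verit) zero_le_power2 mult_nonneg_nonneg)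
      then have "(a * cmod (z1 0))\<^sup>2 = 0 \<and> (b * cmod (z2 0))\<^sup>2 = 0 \<and> ((a+b) * cmod (z3 0))\<^sup>2 = 0"
        unfolding Q_def power_mult_distrib by (smt (verit) zero_le_power2 mult_nonneg_nonneg)
      then have "a * z1 0 = 0" "b * z2 0 = 0" "(a+b) * z3 0 = 0" by (auto simp flip: of_real_add)
      then have "inf_act 0 a b p0 = 0" unfolding p0 inf_act_def prod.case
        by (simp only: mult.assoc mult_zero_right zero_prod_def)
      moreover have "lam * 0 + mu * a + nu * b = 0" using h c0 by simp
      ultimately have "a = 0 \<and> b = 0" using orb unfolding orbit_2dim_def by blast
      then show False using ab by simp
    qed
    define lo where "lo = min 0 t"
    define hi where "hi = max 0 t"
    have sub: "{lo..hi} \<subseteq> {-e<..<e}" unfolding lo_def hi_def using t by auto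
    have e0: "0 < e" using t by auto
    have der: "\<And>s. s \<in> {-e<..<e} \<Longrightarrow>
        (z1 has_vector_derivative (- of_real nu * z1 s - of_real lam * cnj (z2 s * z3 s))) (at s) \<and>
        (z2 has_vector_derivative (of_real mu * z2 s - of_real lam * cnj (z3 s * z1 s))) (at s) \<and>
        (z3 has_vector_derivative (of_real (nu - mu) * z3 s - of_real lam * cnj (z1 s * z2 s))) (at s)"
      using sol unfolding is_solution_def by blast
    have cS: "continuous_on {lo..hi} (\<lambda>s. cmod (z1 s) + cmod (z2 s) + cmod (z3 s))"
    proof -
      have "continuous_on {lo..hi} z1" by (rule cont_of_deriv) (use der sub in blast)
      moreover have "continuous_on {lo..hi} z2" by (rule cont_of_deriv) (use der sub in blast)
      moreover have "continuous_on {lo..hi} z3" by (rule cont_of_deriv) (use der sub in blast)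
      ultimately show ?thesis by (intro continuous_intros)
    qed
    obtain smax where "smax \<in> {lo..hi}" and smax: "\<And>s. s \<in> {lo..hi} \<Longrightarrow> cmod (z1 s) + cmod (z2 s) + cmod (z3 s) \<le> cmod (z1 smax) + cmod (z2 smax) + cmod (z3 smax)"
      using continuous_attains_sup[OF compact_Icc _ cS] unfolding lo_def hi_def by fastforce
    define Sb where "Sb = cmod (z1 smax) + cmod (z2 smax) + cmod (z3 smax)"
    define m where "m = \<bar>a*b\<bar> + \<bar>b*(a+b)\<bar> + \<bar>a*(a+b)\<bar>"
    define W where "W = a\<^sup>2 + b\<^sup>2 + (a+b)\<^sup>2"
    have m0: "m > 0"
    proof -
      have ge: "\<bar>a*b\<bar> \<le> m" "\<bar>b*(a+b)\<bar> \<le> m" "\<bar>a*(a+b)\<bar> \<le> m" unfolding m_def by auto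
      show ?thesis
      proof (cases "a = 0")
        case True
        then have "b \<noteq> 0" using ab by simp
        then have "0 < \<bar>b*(a+b)\<bar>" using True by (auto simp: zero_less_mult_iff)
        then show ?thesis using ge by linarith
      next
        case False
        show ?thesis
        proof (cases "b = 0")
          case True
          then have "0 < \<bar>a*(a+b)\<bar>" using False by (auto simp: zero_less_mult_iff)
          then show ?thesis using ge by linarith
        next
          case False2: False
          then have "0 < \<bar>a*b\<bar>" using False by simp
          then show ?thesis using ge by linarith
        qed
      qed
    qed
    define Q' where "Q' s = 2*(- nu * a\<^sup>2 * (cmod (z1 s))\<^sup>2 + mu * b\<^sup>2 * (cmod (z2 s))\<^sup>2 + (nu - mu) * (a+b)\<^sup>2 * (cmod (z3 s))\<^sup>2)
           - 2 * lam * W * Re (z1 s * z2 s * z3 s)" for s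
    have dQ: "(Q has_real_derivative Q' s) (at s)" if s: "s \<in> {lo..hi}" for s
    proof -
      have ds: "(z1 has_vector_derivative (- of_real nu * z1 s - of_real lam * cnj (z2 s * z3 s))) (at s)"
               "(z2 has_vector_derivative (of_real mu * z2 s - of_real lam * cnj (z3 s * z1 s))) (at s)"
               "(z3 has_vector_derivative (of_real (nu - mu) * z3 s - of_real lam * cnj (z1 s * z2 s))) (at s)"
        using der[of s] s sub by auto
      have "(Q has_real_derivative a\<^sup>2 * (2 * Re (cnj (z1 s) * (- of_real nu * z1 s - of_real lam * cnj (z2 s * z3 s))))
          + b\<^sup>2 * (2 * Re (cnj (z2 s) * (of_real mu * z2 s - of_real lam * cnj (z3 s * z1 s))))
          + (a+b)\<^sup>2 * (2 * Re (cnj (z3 s) * (of_real (nu - mu) * z3 s - of_real lam * cnj (z1 s * z2 s))))) (at s)"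
        unfolding Q_def
        by (intro DERIV_add DERIV_cmult nq_deriv ds)
      then show ?thesis
        by (rule DERIV_cong) (simp only: re_eq1 re_eq2 re_eq3 Q'_def W_def; simp add: algebra_simps)
    qed
    have bQ: "\<bar>Q' s\<bar> \<le> (2*(\<bar>mu\<bar>+\<bar>nu\<bar>) + 3*\<bar>lam\<bar>*W*Sb/m) * Q s" if s: "s \<in> {lo..hi}" for s
      unfolding Q'_def Q_def W_def m_def
      by (rule Qbound) (use m0 smax[OF s] in \<open>simp_all add: m_def Sb_def\<close>)
    have "Q t > 0"
      by (rule gron[OF dQ bQ _ _ Q0]) (unfold lo_def hi_def, auto)
    then show False using Qt by simp
  qed
qed



lemma basis_g:
  fixes lam mu nu :: real
  assumes nz: "lam \<noteq> 0 \<or> mu \<noteq> 0 \<or> nu \<noteq> 0"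
  shows "\<exists>c1 a1 b1 c2 a2 b2 \<tau>. \<tau> \<noteq> 0 \<and> a1*b2 - b1*a2 = \<tau>*lam \<and> b1*c2 - c1*b2 = \<tau>*mu \<and> c1*a2 - a1*c2 = \<tau>*nu
     \<and> lam*c1 + mu*a1 + nu*b1 = 0 \<and> lam*c2 + mu*a2 + nu*b2 = 0
     \<and> (\<forall>c a b. lam*c + mu*a + nu*b = 0 \<longrightarrow> (\<exists>s1 s2. c = s1*c1 + s2*c2 \<and> a = s1*a1 + s2*a2 \<and> b = s1*b1 + s2*b2))"
proof (cases "lam = 0")
  case False
  have lam0: "lam \<noteq> 0" using False .
  have sp: "\<exists>s1 s2. c = s1 * - mu + s2 * - nu \<and> a = s1 * lam + s2 * 0 \<and> b = s1 * 0 + s2 * lam"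
    if h: "lam * c + mu * a + nu * b = 0" for c a b
  proof -
    have "c * lam = - (mu * a + nu * b)" using h by (simp add: algebra_simps)
    then have "c = a / lam * - mu + b / lam * - nu" using lam0 by (simp add: field_simps)
    moreover have "a = a/lam * lam + b/lam * 0" "b = a/lam * 0 + b/lam * lam" using lam0 by auto
    ultimately show ?thesis by blast
  qed
  have H: "lam \<noteq> 0 \<and> lam*lam - 0*0 = lam*lam \<and> 0*(-nu) - (-mu)*lam = lam*mu \<and> (-mu)*0 - lam*(-nu) = lam*nu
     \<and> lam*(-mu) + mu*lam + nu*0 = 0 \<and> lam*(-nu) + mu*0 + nu*lam = 0
     \<and> (\<forall>c a b. lam*c + mu*a + nu*b = 0 \<longrightarrow> (\<exists>s1 s2. c = s1*(-mu) + s2*(-nu) \<and> a = s1*lam + s2*0 \<and> b = s1*0 + s2*lam))"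
    using lam0 sp by (simp add: algebra_simps)
  show ?thesis
    apply (rule exI[of _ "-mu"]) apply (rule exI[of _ lam]) apply (rule exI[of _ 0])
    apply (rule exI[of _ "-nu"]) apply (rule exI[of _ 0]) apply (rule exI[of _ lam]) apply (rule exI[of _ lam])
    by (rule H)
next
  case True
  then have mn: "mu \<noteq> 0 \<or> nu \<noteq> 0" using nz by simp
  have sp: "\<exists>s1 s2. c = s1 * 1 + s2 * 0 \<and> a = s1 * 0 + s2 * - nu \<and> b = s1 * 0 + s2 * mu"
    if h: "lam * c + mu * a + nu * b = 0" for c a b
  proof -
    have h': "mu * a + nu * b = 0" using h True by simp
    show ?thesis
    proof (cases "mu = 0")
      case True
      then have nu0: "nu \<noteq> 0" using mn by simp
      have "c = c * 1 + (-a/nu) * 0 \<and> a = c * 0 + (-a/nu) * - nu \<and> b = c * 0 + (-a/nu) * mu"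
        using h' True nu0 by (auto simp: field_simps)
      then show ?thesis by blast
    next
      case False
      have "c = c * 1 + (b/mu) * 0 \<and> a = c * 0 + (b/mu) * - nu \<and> b = c * 0 + (b/mu) * mu"
        using h' False by (auto simp: field_simps)
      then show ?thesis by blast
    qed
  qed
  have H: "(-1::real) \<noteq> 0 \<and> 0*mu - 0*(-nu) = (-1)*lam \<and> 0*0 - 1*mu = (-1)*mu \<and> 1*(-nu) - 0*0 = (-1)*nu
     \<and> lam*1 + mu*0 + nu*0 = 0 \<and> lam*0 + mu*(-nu) + nu*mu = 0
     \<and> (\<forall>c a b. lam*c + mu*a + nu*b = 0 \<longrightarrow> (\<exists>s1 s2. c = s1*1 + s2*0 \<and> a = s1*0 + s2*(-nu) \<and> b = s1*0 + s2*mu))"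
    using True sp by (simp add: algebra_simps)
  show ?thesis
    apply (rule exI[of _ 1]) apply (rule exI[of _ 0]) apply (rule exI[of _ 0])
    apply (rule exI[of _ 0]) apply (rule exI[of _ "-nu"]) apply (rule exI[of _ mu]) apply (rule exI[of _ "-1"])
    by (rule H)
qed

lemma inf_act_lin:
  "inf_act (s1*c1 + s2*c2) (s1*a1 + s2*a2) (s1*b1 + s2*b2) p = s1 *\<^sub>R inf_act c1 a1 b1 p + s2 *\<^sub>R inf_act c2 a2 b2 p"
  by (cases p) (simp add: inf_act_def scaleR_conv_of_real algebra_simps)

lemma VV_scale0:
  "VV (\<tau>*lam) (\<tau>*mu) (\<tau>*nu) z1 z2 z3 = \<tau> *\<^sub>R (0::real, - of_real nu * z1 - of_real lam * cnj (z2 * z3), of_real mu * z2 - of_real lam * cnj (z3 * z1), of_real (nu - mu) * z3 - of_real lam * cnj (z1 * z2))"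
  by (simp add: VV_def scaleR_conv_of_real algebra_simps)

lemma VV_scale:
  assumes "\<tau> \<noteq> 0"
  shows "(0::real, - of_real nu * z1 - of_real lam * cnj (z2 * z3), of_real mu * z2 - of_real lam * cnj (z3 * z1), of_real (nu - mu) * z3 - of_real lam * cnj (z1 * z2))
     = inverse \<tau> *\<^sub>R VV (\<tau>*lam) (\<tau>*mu) (\<tau>*nu) z1 z2 z3"
  unfolding VV_scale0 using assms by simp

lemma phi0_scale: "phi0 (k *\<^sub>R u) v w = k * phi0 u v w"
  by (cases u, cases v, cases w) (simp add: phi0_def dx3_def coord_def algebra_simps)




lemma G_pos:
  fixes p :: R7
  assumes orb: "orbit_2dim lam mu nu p" and nz: "lam \<noteq> 0 \<or> mu \<noteq> 0 \<or> nu \<noteq> 0"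
    and tau: "\<tau> \<noteq> 0" and cr: "a1*b2 - b1*a2 = \<tau>*lam" "b1*c2 - c1*b2 = \<tau>*mu" "c1*a2 - a1*c2 = \<tau>*nu"
    and g1: "lam*c1 + mu*a1 + nu*b1 = 0" and g2: "lam*c2 + mu*a2 + nu*b2 = 0"
  defines "X1 \<equiv> inf_act c1 a1 b1 p" and "X2 \<equiv> inf_act c2 a2 b2 p"
  shows "(X1 \<bullet> X1) * (X2 \<bullet> X2) - (X1 \<bullet> X2) * (X1 \<bullet> X2) > 0"
proof -
  obtain x z1 z2 z3 where p: "p = (x, z1, z2, z3)" by (cases p) auto
  have Gnn: "0 \<le> (X1 \<bullet> X1) * (X2 \<bullet> X2) - (X1 \<bullet> X2) * (X1 \<bullet> X2)"
    unfolding X1_def X2_def p core_vv[symmetric] by simp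
  have "(X1 \<bullet> X1) * (X2 \<bullet> X2) - (X1 \<bullet> X2) * (X1 \<bullet> X2) \<noteq> 0"
  proof
    assume G0: "(X1 \<bullet> X1) * (X2 \<bullet> X2) - (X1 \<bullet> X2) * (X1 \<bullet> X2) = 0"
    show False
    proof (cases "X1 \<bullet> X1 = 0")
      case True
      then have "inf_act c1 a1 b1 p = 0" unfolding X1_def by simp
      then have "c1 = 0 \<and> a1 = 0 \<and> b1 = 0" using orb g1 unfolding orbit_2dim_def by blast
      then show False using cr tau nz by auto
    next
      case False
      define s1 where "s1 = - (X1 \<bullet> X2)"
      define s2 where "s2 = X1 \<bullet> X1"
      define Y where "Y = s1 *\<^sub>R X1 + s2 *\<^sub>R X2"
      have "Y \<bullet> Y = s1 * s1 * (X1 \<bullet> X1) + 2 * s1 * s2 * (X1 \<bullet> X2) + s2 * s2 * (X2 \<bullet> X2)"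
        unfolding Y_def by (simp add: inner_add_left inner_add_right inner_commute[of X2 X1] algebra_simps)
      also have "\<dots> = s2 * ((X1 \<bullet> X1) * (X2 \<bullet> X2) - (X1 \<bullet> X2) * (X1 \<bullet> X2))"
        unfolding s1_def s2_def by (simp add: algebra_simps)
      finally have "Y \<bullet> Y = s2 * ((X1 \<bullet> X1) * (X2 \<bullet> X2) - (X1 \<bullet> X2) * (X1 \<bullet> X2))" .
      then have "Y = 0" using G0 by simp
      then have "inf_act (s1*c1 + s2*c2) (s1*a1 + s2*a2) (s1*b1 + s2*b2) p = 0"
        unfolding inf_act_lin Y_def X1_def X2_def .
      moreover have "lam * (s1*c1 + s2*c2) + mu * (s1*a1 + s2*a2) + nu * (s1*b1 + s2*b2) = 0"
      proof -
        have "lam * (s1*c1 + s2*c2) + mu * (s1*a1 + s2*a2) + nu * (s1*b1 + s2*b2) = s1*(lam*c1 + mu*a1 + nu*b1) + s2*(lam*c2 + mu*a2 + nu*b2)"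
          by (simp add: algebra_simps)
        then show ?thesis using g1 g2 by simp
      qed
      ultimately have z: "s1*c1 + s2*c2 = 0" "s1*a1 + s2*a2 = 0" "s1*b1 + s2*b2 = 0"
        using orb unfolding orbit_2dim_def by blast+
      have za: "s2*a2 = -(s1*a1)" and zb: "s2*b2 = -(s1*b1)" and zc: "s2*c2 = -(s1*c1)" using z by linarith+
      have "s2 * (a1*b2 - b1*a2) = a1 * (s2*b2) - b1 * (s2*a2)" by (simp add: algebra_simps)
      also have "\<dots> = 0" unfolding za zb by (simp add: algebra_simps)
      finally have q1: "s2 * (\<tau>*lam) = 0" using cr by simp
      have "s2 * (b1*c2 - c1*b2) = b1 * (s2*c2) - c1 * (s2*b2)" by (simp add: algebra_simps)
      also have "\<dots> = 0" unfolding zc zb by (simp add: algebra_simps)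
      finally have q2: "s2 * (\<tau>*mu) = 0" using cr by simp
      have "s2 * (c1*a2 - a1*c2) = c1 * (s2*a2) - a1 * (s2*c2)" by (simp add: algebra_simps)
      also have "\<dots> = 0" unfolding za zc by (simp add: algebra_simps)
      finally have q3: "s2 * (\<tau>*nu) = 0" using cr by simp
      have "s2 \<noteq> 0" using False s2_def by simp
      then show False using q1 q2 q3 tau nz by simp
    qed
  qed
  then show ?thesis using Gnn by linarith
qed



lemma core_orth2:
  fixes z1 z2 z3 :: complex and x c1 a1 b1 c2 a2 b2 :: real
  shows "VV (a1*b2 - b1*a2) (b1*c2 - c1*b2) (c1*a2 - a1*c2) z1 z2 z3 \<bullet> inf_act c2 a2 b2 (x,z1,z2,z3) = 0"
  unfolding inf_act_simp VV_def inner_R7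
  by (simp add: algebra_simps)

lemma assoc_main:
  fixes lam mu nu e :: real and p0 :: R7
  assumes nz: "lam \<noteq> 0 \<or> mu \<noteq> 0 \<or> nu \<noteq> 0" and orb: "orbit_2dim lam mu nu p0"
    and sol: "is_solution lam mu nu p0 {-e<..<e} x1 z1 z2 z3" and e0: "e > 0"
  shows "associative_3fold (swept lam mu nu {-e<..<e} x1 z1 z2 z3)"
proof -
  obtain c1 a1 b1 c2 a2 b2 \<tau> where tau: "\<tau> \<noteq> 0"
    and cr: "a1*b2 - b1*a2 = \<tau>*lam" "b1*c2 - c1*b2 = \<tau>*mu" "c1*a2 - a1*c2 = \<tau>*nu"
    and g1: "lam*c1 + mu*a1 + nu*b1 = 0" and g2: "lam*c2 + mu*a2 + nu*b2 = 0"
    and sp: "\<And>c a b. lam*c + mu*a + nu*b = 0 \<Longrightarrow> (\<exists>s1 s2. c = s1*c1 + s2*c2 \<and> a = s1*a1 + s2*a2 \<and> b = s1*b1 + s2*b2)"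
    using basis_g[OF nz] by blast
  define I where "I = {-e<..<e}"
  define P where "P t = (x1 t, z1 t, z2 t, z3 t)" for t
  define Z1 where "Z1 t = - of_real nu * z1 t - of_real lam * cnj (z2 t * z3 t)" for t
  define Z2 where "Z2 t = of_real mu * z2 t - of_real lam * cnj (z3 t * z1 t)" for t
  define Z3 where "Z3 t = of_real (nu - mu) * z3 t - of_real lam * cnj (z1 t * z2 t)" for t
  define vel where "vel t = (0::real, Z1 t, Z2 t, Z3 t)" for t
  define X1 where "X1 t = inf_act c1 a1 b1 (P t)" for t
  define X2 where "X2 t = inf_act c2 a2 b2 (P t)" for t
  define Al where "Al (u::real\<times>real\<times>real) = fst (snd u) * a1 + snd (snd u) * a2" for u
  define Be where "Be (u::real\<times>real\<times>real) = fst (snd u) * b1 + snd (snd u) * b2" for u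
  define Ce where "Ce (u::real\<times>real\<times>real) = fst (snd u) * c1 + snd (snd u) * c2" for u
  define F where "F u = act (Ce u) (Al u) (Be u) (P (fst u))" for u
  define W0 where "W0 u = act 0 (Al u) (Be u) (vel (fst u))" for u
  define W1 where "W1 u = act 0 (Al u) (Be u) (X1 (fst u))" for u
  define W2 where "W2 u = act 0 (Al u) (Be u) (X2 (fst u))" for u
  define Lin where "Lin u h = fst h *\<^sub>R W0 u + fst (snd h) *\<^sub>R W1 u + snd (snd h) *\<^sub>R W2 u" for u h
  define DF where "DF u = Blinfun (Lin u)" for u
  define U where "U = I \<times> (UNIV :: (real\<times>real) set)"
  define s where "s = (if \<tau> > 0 then 1 else -1 :: real)"
  have der: "\<And>t. t \<in> I \<Longrightarrow> (x1 has_real_derivative 0) (at t) \<and>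
        (z1 has_vector_derivative Z1 t) (at t) \<and> (z2 has_vector_derivative Z2 t) (at t) \<and>
        (z3 has_vector_derivative Z3 t) (at t)"
    using sol unfolding is_solution_def I_def Z1_def Z2_def Z3_def by blast
  have bl: "bounded_linear (Lin u)" for u
    unfolding Lin_def
    by (intro bounded_linear_add bounded_linear_compose[OF bounded_linear_scaleR_left]
        bounded_linear_fst bounded_linear_snd bounded_linear_compose[OF bounded_linear_fst]
        bounded_linear_compose[OF bounded_linear_snd])
  have DFa: "blinfun_apply (DF u) = Lin u" for u
    unfolding DF_def by (rule bounded_linear_Blinfun_apply[OF bl])
  have geo: "vel t \<bullet> X1 t = 0 \<and> vel t \<bullet> X2 t = 0 \<and>
      phi0 (vel t) (X1 t) (X2 t) = inverse \<tau> * ((X1 t \<bullet> X1 t) * (X2 t \<bullet> X2 t) - (X1 t \<bullet> X2 t) * (X1 t \<bullet> X2 t)) \<and>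
      vel t \<bullet> vel t = (inverse \<tau>)\<^sup>2 * ((X1 t \<bullet> X1 t) * (X2 t \<bullet> X2 t) - (X1 t \<bullet> X2 t) * (X1 t \<bullet> X2 t))" for t
  proof -
    define V where "V = VV (a1*b2 - b1*a2) (b1*c2 - c1*b2) (c1*a2 - a1*c2) (z1 t) (z2 t) (z3 t)"
    have vV: "vel t = inverse \<tau> *\<^sub>R V"
      unfolding vel_def Z1_def Z2_def Z3_def V_def cr by (rule VV_scale[OF tau])
    have o1: "V \<bullet> X1 t = 0" unfolding V_def X1_def P_def by (rule core_orth)
    have o2: "V \<bullet> X2 t = 0" unfolding V_def X2_def P_def by (rule core_orth2)
    have vv: "V \<bullet> V = (X1 t \<bullet> X1 t) * (X2 t \<bullet> X2 t) - (X1 t \<bullet> X2 t) * (X1 t \<bullet> X2 t)"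
      unfolding V_def X1_def X2_def P_def by (rule core_vv)
    have ph: "phi0 V (X1 t) (X2 t) = (X1 t \<bullet> X1 t) * (X2 t \<bullet> X2 t) - (X1 t \<bullet> X2 t) * (X1 t \<bullet> X2 t)"
      unfolding V_def X1_def X2_def P_def by (rule core_phi)
    show ?thesis unfolding vV phi0_scale using o1 o2 vv ph by (simp add: power2_eq_square)
  qed
  have Gpos: "(X1 t \<bullet> X1 t) * (X2 t \<bullet> X2 t) - (X1 t \<bullet> X2 t) * (X1 t \<bullet> X2 t) > 0" if t: "t \<in> I" for t
    unfolding X1_def X2_def
    by (rule G_pos[OF _ nz tau cr g1 g2]) (unfold P_def, rule orbit_pres[OF sol orb t[unfolded I_def]])
  have Wi: "W0 u \<bullet> W0 u = vel (fst u) \<bullet> vel (fst u)" "W0 u \<bullet> W1 u = vel (fst u) \<bullet> X1 (fst u)"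
    "W0 u \<bullet> W2 u = vel (fst u) \<bullet> X2 (fst u)" "W1 u \<bullet> W1 u = X1 (fst u) \<bullet> X1 (fst u)"
    "W1 u \<bullet> W2 u = X1 (fst u) \<bullet> X2 (fst u)" "W2 u \<bullet> W2 u = X2 (fst u) \<bullet> X2 (fst u)" for u
    unfolding W0_def W1_def W2_def inner_act0 by simp_all
  have P1: "phi0 (W0 u) (W1 u) (W2 u) = phi0 (vel (fst u)) (X1 (fst u)) (X2 (fst u))" for u
    unfolding W0_def W1_def W2_def phi0_act0 ..
  show ?thesis unfolding associative_3fold_def
  proof (intro exI[of _ U] exI[of _ F] exI[of _ DF] exI[of _ s] conjI ballI)
    show "open U" unfolding U_def I_def by (intro open_Times) auto
    show "connected U" unfolding U_def I_def by (intro convex_connected convex_Times) auto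
    show "U \<noteq> {}" unfolding U_def I_def using e0 by auto
    show "F ` U = swept lam mu nu {-e<..<e} x1 z1 z2 z3"
    proof (rule set_eqI, rule iffI)
      fix y assume "y \<in> F ` U"
      then obtain u where u: "u \<in> U" and y: "y = F u" by blast
      have "lam * Ce u + mu * Al u + nu * Be u = fst (snd u) * (lam*c1 + mu*a1 + nu*b1) + snd (snd u) * (lam*c2 + mu*a2 + nu*b2)"
        unfolding Ce_def Al_def Be_def by (simp add: algebra_simps)
      then have "lam * Ce u + mu * Al u + nu * Be u = 0" using g1 g2 by simp
      moreover have "fst u \<in> {-e<..<e}" using u unfolding U_def I_def by auto
      ultimately show "y \<in> swept lam mu nu {-e<..<e} x1 z1 z2 z3"
        unfolding swept_def y F_def P_def by blast
    next
      fix y assume "y \<in> swept lam mu nu {-e<..<e} x1 z1 z2 z3"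
      then obtain t c a b where y: "y = act c a b (x1 t, z1 t, z2 t, z3 t)" and t: "t \<in> {-e<..<e}"
        and h: "lam * c + mu * a + nu * b = 0" unfolding swept_def by blast
      obtain s1 s2 where ss: "c = s1*c1 + s2*c2" "a = s1*a1 + s2*a2" "b = s1*b1 + s2*b2" using sp[OF h] by blast
      have "F (t, s1, s2) = y" unfolding F_def y P_def Ce_def Al_def Be_def ss by (simp add: mult.commute)
      moreover have "(t, s1, s2) \<in> U" unfolding U_def I_def using t by simp
      ultimately show "y \<in> F ` U" by blast
    qed
    show "continuous_on U DF"
    proof (rule continuous_on_blinfun_componentwise)
      have cI: "continuous_on I z1" "continuous_on I z2" "continuous_on I z3"
        by (rule cont_of_deriv; use der in blast)+
      have fU: "fst ` U \<subseteq> I" unfolding U_def by auto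
      have cz: "continuous_on U (\<lambda>u. z1 (fst u))" "continuous_on U (\<lambda>u. z2 (fst u))" "continuous_on U (\<lambda>u. z3 (fst u))"
        by (rule continuous_on_compose2[OF cI(1) continuous_on_fst[OF continuous_on_id] fU]
                 continuous_on_compose2[OF cI(2) continuous_on_fst[OF continuous_on_id] fU]
                 continuous_on_compose2[OF cI(3) continuous_on_fst[OF continuous_on_id] fU])+
      have cW: "continuous_on U W0" "continuous_on U W1" "continuous_on U W2"
        unfolding W0_def W1_def W2_def vel_def X1_def X2_def P_def inf_act_simp act0 Al_def Be_def Z1_def Z2_def Z3_def
        by (intro continuous_intros cz)+
      fix i :: "real \<times> real \<times> real"
      show "continuous_on U (\<lambda>x. DF x i)" unfolding DFa Lin_def
        by (intro continuous_intros cW)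
    qed
    show "s = 1 \<or> s = -1" unfolding s_def by simp
  next
    fix u assume u: "u \<in> U"
    define t where "t = fst u"
    have t: "t \<in> I" using u unfolding U_def t_def by auto
    have dfst: "((\<lambda>u. fst u) has_derivative (\<lambda>h. fst h)) (at u)"
      by (rule has_derivative_fst[OF has_derivative_ident])
    have dx: "(x1 has_derivative (\<lambda>h. 0 * h)) (at (fst u))"
      using der[OF t] unfolding t_def has_field_derivative_def by blast
    have dzs: "(z1 has_derivative (\<lambda>h. h *\<^sub>R Z1 t)) (at (fst u))"
       "(z2 has_derivative (\<lambda>h. h *\<^sub>R Z2 t)) (at (fst u))"
       "(z3 has_derivative (\<lambda>h. h *\<^sub>R Z3 t)) (at (fst u))"
      using der[OF t] unfolding t_def has_vector_derivative_def by blast+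
    have cz1: "((\<lambda>u. z1 (fst u)) has_derivative (\<lambda>h. fst h *\<^sub>R Z1 t)) (at u)"
      by (rule has_derivative_compose[OF dfst dzs(1)])
    have cz2: "((\<lambda>u. z2 (fst u)) has_derivative (\<lambda>h. fst h *\<^sub>R Z2 t)) (at u)"
      by (rule has_derivative_compose[OF dfst dzs(2)])
    have cz3: "((\<lambda>u. z3 (fst u)) has_derivative (\<lambda>h. fst h *\<^sub>R Z3 t)) (at u)"
      by (rule has_derivative_compose[OF dfst dzs(3)])
    have cx: "((\<lambda>u. x1 (fst u)) has_derivative (\<lambda>h. 0 * fst h)) (at u)"
      by (rule has_derivative_compose[OF dfst dx])
    have blfs: "bounded_linear (\<lambda>x::real\<times>real\<times>real. fst (snd x))"
      by (rule bounded_linear_compose[OF bounded_linear_fst bounded_linear_snd])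
    have blss: "bounded_linear (\<lambda>x::real\<times>real\<times>real. snd (snd x))"
      by (rule bounded_linear_compose[OF bounded_linear_snd bounded_linear_snd])
    have blc: "bounded_linear (\<lambda>x::real\<times>real\<times>real. fst (snd x) * k1 + snd (snd x) * k2)" for k1 k2 :: real
      by (intro bounded_linear_add bounded_linear_compose[OF bounded_linear_mult_left blfs]
                bounded_linear_compose[OF bounded_linear_mult_left blss])
    have dAl: "(Al has_derivative Al) (at u)" unfolding Al_def by (rule bounded_linear_imp_has_derivative[OF blc])
    have dBe: "(Be has_derivative Be) (at u)" unfolding Be_def by (rule bounded_linear_imp_has_derivative[OF blc])
    have dCe: "(Ce has_derivative Ce) (at u)" unfolding Ce_def by (rule bounded_linear_imp_has_derivative[OF blc])
    have dAB: "((\<lambda>u. - (Al u + Be u)) has_derivative (\<lambda>h. - (Al h + Be h))) (at u)"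
      by (intro has_derivative_minus has_derivative_add dAl dBe)
    have d0: "((\<lambda>u. x1 (fst u) + Ce u) has_derivative (\<lambda>h. 0 * fst h + Ce h)) (at u)"
      by (rule has_derivative_add[OF cx dCe])
    have d1: "((\<lambda>u. cis (Al u) * z1 (fst u)) has_derivative (\<lambda>h. cis (Al u) * (fst h *\<^sub>R Z1 t) + (Al h *\<^sub>R (\<i> * cis (Al u))) * z1 (fst u))) (at u)"
      by (rule has_derivative_mult[OF has_derivative_cis[OF dAl] cz1])
    have d2: "((\<lambda>u. cis (Be u) * z2 (fst u)) has_derivative (\<lambda>h. cis (Be u) * (fst h *\<^sub>R Z2 t) + (Be h *\<^sub>R (\<i> * cis (Be u))) * z2 (fst u))) (at u)"
      by (rule has_derivative_mult[OF has_derivative_cis[OF dBe] cz2])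
    have d3: "((\<lambda>u. cis (- (Al u + Be u)) * z3 (fst u)) has_derivative (\<lambda>h. cis (- (Al u + Be u)) * (fst h *\<^sub>R Z3 t) + ((- (Al h + Be h)) *\<^sub>R (\<i> * cis (- (Al u + Be u)))) * z3 (fst u))) (at u)"
      by (rule has_derivative_mult[OF has_derivative_cis[OF dAB] cz3])
    have Fe: "F = (\<lambda>u. (x1 (fst u) + Ce u, cis (Al u) * z1 (fst u), cis (Be u) * z2 (fst u), cis (- (Al u + Be u)) * z3 (fst u)))"
      by (rule ext) (simp add: F_def act_def P_def)
    show "(F has_derivative blinfun_apply (DF u)) (at u)"
      unfolding DFa Fe
    proof (rule has_derivative_eq_rhs[OF has_derivative_Pair[OF d0 has_derivative_Pair[OF d1 has_derivative_Pair[OF d2 d3]]]])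
      show "(\<lambda>h. (0 * fst h + Ce h, cis (Al u) * (fst h *\<^sub>R Z1 t) + (Al h *\<^sub>R (\<i> * cis (Al u))) * z1 (fst u),
              cis (Be u) * (fst h *\<^sub>R Z2 t) + (Be h *\<^sub>R (\<i> * cis (Be u))) * z2 (fst u),
              cis (- (Al u + Be u)) * (fst h *\<^sub>R Z3 t) + ((- (Al h + Be h)) *\<^sub>R (\<i> * cis (- (Al u + Be u)))) * z3 (fst u)))
            = Lin u"
      proof (rule ext)
        fix h
        show "(0 * fst h + Ce h, cis (Al u) * (fst h *\<^sub>R Z1 t) + (Al h *\<^sub>R (\<i> * cis (Al u))) * z1 (fst u),
              cis (Be u) * (fst h *\<^sub>R Z2 t) + (Be h *\<^sub>R (\<i> * cis (Be u))) * z2 (fst u),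
              cis (- (Al u + Be u)) * (fst h *\<^sub>R Z3 t) + ((- (Al h + Be h)) *\<^sub>R (\<i> * cis (- (Al u + Be u)))) * z3 (fst u))
            = Lin u h"
          unfolding Lin_def W0_def W1_def W2_def vel_def X1_def X2_def P_def inf_act_simp act0 t_def
          by (simp add: Al_def Be_def Ce_def scaleR_conv_of_real algebra_simps)
      qed
    qed
  next
    fix u assume u: "u \<in> U"
    define t where "t = fst u"
    have t: "t \<in> I" using u unfolding U_def t_def by auto
    define A where "A = X1 t \<bullet> X1 t"
    define B where "B = X1 t \<bullet> X2 t"
    define C where "C = X2 t \<bullet> X2 t"
    have G: "A * C - B * B > 0" using Gpos[OF t] unfolding A_def B_def C_def .
    have vvp: "vel t \<bullet> vel t > 0" using geo[of t] G tau unfolding A_def B_def C_def by simp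
    have ip: "Lin u k \<bullet> W0 u = fst k * (vel t \<bullet> vel t)"
       "Lin u k \<bullet> W1 u = fst (snd k) * A + snd (snd k) * B"
       "Lin u k \<bullet> W2 u = fst (snd k) * B + snd (snd k) * C" for k
      unfolding Lin_def inner_add_left inner_scaleR_left A_def B_def C_def t_def
      using Wi[of u] geo[of "fst u"] by (simp_all add: inner_commute)
    have k0: "k = 0" if k: "Lin u k = 0" for k
    proof -
      have "fst k * (vel t \<bullet> vel t) = 0" using ip(1)[of k] k by simp
      then have kt: "fst k = 0" using vvp by simp
      have e1: "fst (snd k) * A + snd (snd k) * B = 0" using ip(2)[of k] k by simp
      have e2: "fst (snd k) * B + snd (snd k) * C = 0" using ip(3)[of k] k by simp
      have "fst (snd k) * (A * C - B * B) = C * (fst (snd k) * A + snd (snd k) * B) - B * (fst (snd k) * B + snd (snd k) * C)"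
        by (simp add: algebra_simps)
      then have k1: "fst (snd k) = 0" using e1 e2 G by simp
      have "snd (snd k) * (A * C - B * B) = A * (fst (snd k) * B + snd (snd k) * C) - B * (fst (snd k) * A + snd (snd k) * B)"
        by (simp add: algebra_simps)
      then have k2: "snd (snd k) = 0" using e1 e2 G by simp
      show ?thesis using kt k1 k2 by (simp add: prod_eq_iff)
    qed
    show "inj (blinfun_apply (DF u))" unfolding DFa
    proof (rule injI)
      fix x y assume "Lin u x = Lin u y"
      then have "Lin u (x - y) = 0" by (simp add: linear_diff[OF bounded_linear.linear[OF bl]])
      then have "x - y = 0" by (rule k0)
      then show "x = y" by simp
    qed
  next
    fix u assume u: "u \<in> U"
    define t where "t = fst u"
    have t: "t \<in> I" using u unfolding U_def t_def by auto
    define A where "A = X1 t \<bullet> X1 t"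
    define B where "B = X1 t \<bullet> X2 t"
    define C where "C = X2 t \<bullet> X2 t"
    have G: "A * C - B * B > 0" using Gpos[OF t] unfolding A_def B_def C_def .
    have D: "DF u (1,0,0) = W0 u" "DF u (0,1,0) = W1 u" "DF u (0,0,1) = W2 u"
      by (simp_all add: DFa Lin_def)
    have ph: "phi0 (W0 u) (W1 u) (W2 u) = inverse \<tau> * (A * C - B * B)"
      unfolding P1 using geo[of t] unfolding t_def A_def B_def C_def by simp
    have vo: "vol3 (W0 u) (W1 u) (W2 u) = sqrt ((inverse \<tau>)\<^sup>2 * (A * C - B * B) * (A * C - B * B))"
    proof -
      have c: "W1 u \<bullet> W0 u = 0" "W2 u \<bullet> W0 u = 0" "W0 u \<bullet> W1 u = 0" "W0 u \<bullet> W2 u = 0"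
        "W2 u \<bullet> W1 u = B" "W1 u \<bullet> W2 u = B" "W1 u \<bullet> W1 u = A" "W2 u \<bullet> W2 u = C"
        "W0 u \<bullet> W0 u = (inverse \<tau>)\<^sup>2 * (A * C - B * B)"
        using Wi[of u] geo[of t] unfolding t_def A_def B_def C_def by (simp_all add: inner_commute)
      show ?thesis unfolding vol3_def c by (simp add: algebra_simps)
    qed
    have sq: "sqrt ((inverse \<tau>)\<^sup>2 * (A * C - B * B) * (A * C - B * B)) = \<bar>inverse \<tau>\<bar> * (A * C - B * B)"
      using G by (simp add: real_sqrt_mult power2_eq_square[symmetric])
    show "s * phi0 (DF u (1, 0, 0)) (DF u (0, 1, 0)) (DF u (0, 0, 1)) = vol3 (DF u (1, 0, 0)) (DF u (0, 1, 0)) (DF u (0, 0, 1))"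
      unfolding D ph vo sq s_def using tau by (cases "\<tau> > 0") auto
  qed
qed



lemma im_identity:
  fixes z1 z2 z3 :: complex and lam mu nu :: real
  shows "Im (z1 * z2 * (of_real (nu - mu) * z3 - of_real lam * cnj (z1 * z2))
     + (z1 * (of_real mu * z2 - of_real lam * cnj (z3 * z1)) + (- of_real nu * z1 - of_real lam * cnj (z2 * z3)) * z2) * z3) = 0"
  by (simp add: algebra_simps)

lemma im_const:
  assumes sol: "is_solution lam mu nu p0 {-e<..<e} x1 z1 z2 z3"
  shows "\<exists>A::real. \<forall>t\<in>{-e<..<e}. Im (z1 t * z2 t * z3 t) = A"
proof -
  have d: "((\<lambda>t. Im (z1 t * z2 t * z3 t)) has_derivative (\<lambda>h. 0)) (at t within {-e<..<e})"
    if t: "t \<in> {-e<..<e}" for t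
  proof -
    have ds: "(z1 has_vector_derivative (- of_real nu * z1 t - of_real lam * cnj (z2 t * z3 t))) (at t)"
        "(z2 has_vector_derivative (of_real mu * z2 t - of_real lam * cnj (z3 t * z1 t))) (at t)"
        "(z3 has_vector_derivative (of_real (nu - mu) * z3 t - of_real lam * cnj (z1 t * z2 t))) (at t)"
      using sol t unfolding is_solution_def by blast+
    have "((\<lambda>t. z1 t * z2 t * z3 t) has_vector_derivative
       z1 t * z2 t * (of_real (nu - mu) * z3 t - of_real lam * cnj (z1 t * z2 t))
     + (z1 t * (of_real mu * z2 t - of_real lam * cnj (z3 t * z1 t)) + (- of_real nu * z1 t - of_real lam * cnj (z2 t * z3 t)) * z2 t) * z3 t) (at t)"
      by (intro has_vector_derivative_mult ds)
    from bounded_linear.has_vector_derivative[OF bounded_linear_Im this]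
    have "((\<lambda>t. Im (z1 t * z2 t * z3 t)) has_vector_derivative 0) (at t)"
      unfolding im_identity .
    then show ?thesis unfolding has_vector_derivative_def by (simp add: has_derivative_at_withinI)
  qed
  show ?thesis using has_derivative_zero_constant[OF _ d] by auto
qed

lemma not_slice:
  fixes lam mu nu e :: real
  assumes sol: "is_solution lam mu nu p0 {-e<..<e} x1 z1 z2 z3" and e0: "e > 0" and mn: "mu \<noteq> 0 \<or> nu \<noteq> 0"
  shows "\<forall>x. \<not> swept lam mu nu {-e<..<e} x1 z1 z2 z3 \<subseteq> {p. fst p = x}"
proof (intro allI notI)
  fix x assume sub: "swept lam mu nu {-e<..<e} x1 z1 z2 z3 \<subseteq> {p. fst p = x}"
  obtain a b where ab: "lam * 1 + mu * a + nu * b = 0"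
  proof (cases "mu = 0")
    case True
    then have "nu \<noteq> 0" using mn by simp
    then have "lam * 1 + mu * 0 + nu * (- lam / nu) = 0" using True by simp
    then show ?thesis using that by blast
  next
    case False
    then have "lam * 1 + mu * (- lam / mu) + nu * 0 = 0" by simp
    then show ?thesis using that by blast
  qed
  have m0: "act 0 0 0 (x1 0, z1 0, z2 0, z3 0) \<in> swept lam mu nu {-e<..<e} x1 z1 z2 z3"
    unfolding swept_def using e0 by force
  have m1: "act 1 a b (x1 0, z1 0, z2 0, z3 0) \<in> swept lam mu nu {-e<..<e} x1 z1 z2 z3"
    unfolding swept_def using e0 ab by force
  have "fst (act 0 0 0 (x1 0, z1 0, z2 0, z3 0)) = x" "fst (act 1 a b (x1 0, z1 0, z2 0, z3 0)) = x"
    using m0 m1 sub by auto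
  then show False by (simp add: act_def)
qed

theorem theorem6p2:
  fixes lam mu nu :: real and p0 :: R7
  assumes "lam \<noteq> 0 \<or> mu \<noteq> 0 \<or> nu \<noteq> 0"
    and "orbit_2dim lam mu nu p0"
  shows "\<exists>\<epsilon>>0.
     (\<exists>x1 z1 z2 z3. is_solution lam mu nu p0 {-\<epsilon><..<\<epsilon>} x1 z1 z2 z3) \<and>
     (\<forall>x1 z1 z2 z3. is_solution lam mu nu p0 {-\<epsilon><..<\<epsilon>} x1 z1 z2 z3 \<longrightarrow>
        associative_3fold (swept lam mu nu {-\<epsilon><..<\<epsilon>} x1 z1 z2 z3) \<and>
        ((mu \<noteq> 0 \<or> nu \<noteq> 0) \<longrightarrow>
           (\<forall>x. \<not> swept lam mu nu {-\<epsilon><..<\<epsilon>} x1 z1 z2 z3 \<subseteq> {p. fst p = x})) \<and>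
        (\<exists>A::real. \<forall>t\<in>{-\<epsilon><..<\<epsilon>}. Im (z1 t * z2 t * z3 t) = A))"
proof -
  obtain e where e0: "e > 0" and ex: "\<exists>x1 z1 z2 z3. is_solution lam mu nu p0 {-e<..<e} x1 z1 z2 z3"
    using exists_sol[of lam mu nu p0] by blast
  show ?thesis
  proof (rule exI[of _ e], intro conjI allI impI e0 ex)
    fix x1 z1 z2 z3 assume sol: "is_solution lam mu nu p0 {-e<..<e} x1 z1 z2 z3"
    show "associative_3fold (swept lam mu nu {-e<..<e} x1 z1 z2 z3)"
      by (rule assoc_main[OF assms sol e0])
    show "\<not> swept lam mu nu {-e<..<e} x1 z1 z2 z3 \<subseteq> {p. fst p = x}" if "mu \<noteq> 0 \<or> nu \<noteq> 0" for x
      using not_slice[OF sol e0 that] by blast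
    show "\<exists>A::real. \<forall>t\<in>{-e<..<e}. Im (z1 t * z2 t * z3 t) = A"
      by (rule im_const[OF sol])
  qed
qed

end
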